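(* Let $\mathcal A$ be a unital $C^*$-algebra, $\mathcal H$ a Hilbert space, and $\Phi,\Psi\in\mathcal{CP}(\mathcal A;\mathcal H)$. Fix a minimal Stinespring dilation $(\mathcal M,\pi,J)$ of $\Psi$. Then $\Phi=_C\Psi$ if and only if there exists $E\in F(\Psi)$ with bounded inverse such that $\Phi(a)=J^\dagger\pi(a)EJ$ for all $a\in\mathcal A$.
   Context: $\mathcal{CP}(\mathcal A;\mathcal H)$ is the convex set of unital completely positive linear maps $\Phi:\mathcal A\to\mathcal L(\mathcal H)$ (unital meaning $\Phi(1)=I_{\mathcal H}$). A minimal Stinespring dilation of $\Psi$ is a triple $(\mathcal M,\pi,J)$ with $\mathcal M$ a Hilbert space, $\pi:\mathcal A\to\mathcal L(\mathcal M)$ a unital *-representation and $J:\mathcal H\to\mathcal M$ linear, such that $\Psi(a)=J^\dagger\pi(a)J$ for all $a$ and the vectors $\pi(a)J|v\rangle$ ($a\in\mathcal A$, $|v\rangle\in\mathcal H$) span a dense subspace of $\mathcal M$. $F(\Psi)$ is the set of positive operators $E\in\mathcal L(\mathcal M)$ commuting with $\pi(a)$ for all $a\in\mathcal A$ and satisfying $J^\dagger EJ=I$. For elements of a convex set, $\Phi\leq_C\Psi$ means $\Psi=t\Phi+(1-t)\Psi'$ for some $\Psi'$ in the set and $0<t\leq 1$; $\Phi=_C\Psi$ means $\Phi\leq_C\Psi$ and $\Psi\leq_C\Phi$. *)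

theory Defs
  imports "HOL-Analysis.Analysis"
begin

definition cnonneg :: "complex \<Rightarrow> bool" where
  "cnonneg z \<longleftrightarrow> Im z = 0 \<and> 0 \<le> Re z"

class complex_vector = real_vector +
  fixes scaleC :: "complex \<Rightarrow> 'a \<Rightarrow> 'a" (infixr \<open>*\<^sub>C\<close> 75)
  assumes scaleC_add_right: "c *\<^sub>C (x + y) = c *\<^sub>C x + c *\<^sub>C y"
    and scaleC_add_left: "(b + c) *\<^sub>C x = b *\<^sub>C x + c *\<^sub>C x"
    and scaleC_scaleC: "b *\<^sub>C (c *\<^sub>C x) = (b * c) *\<^sub>C x"
    and scaleC_one: "1 *\<^sub>C x = x"
    and scaleR_scaleC: "r *\<^sub>R x = complex_of_real r *\<^sub>C x"

text \<open>Complex inner product spaces; the inner product is conjugate-linear in the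
  first and linear in the second argument (bra-ket convention); the norm is the one
  induced by the inner product.\<close>
class complex_inner = complex_vector + real_normed_vector +
  fixes cinner :: "'a \<Rightarrow> 'a \<Rightarrow> complex"
  assumes cinner_commute: "cinner x y = cnj (cinner y x)"
    and cinner_add_right: "cinner x (y + z) = cinner x y + cinner x z"
    and cinner_scaleC_right: "cinner x (c *\<^sub>C y) = c * cinner x y"
    and cinner_nonneg: "cnonneg (cinner x x)"
    and norm_eq_sqrt_cinner: "norm x = sqrt (Re (cinner x x))"

class chilbert_space = complex_inner + complete_space

class cstar_algebra = complex_vector + real_normed_algebra_1 + banach +
  fixes invol :: "'a \<Rightarrow> 'a"
  assumes invol_invol: "invol (invol a) = a"
    and invol_add: "invol (a + b) = invol a + invol b"
    and invol_mult: "invol (a * b) = invol b * invol a"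
    and invol_scaleC: "invol (c *\<^sub>C a) = cnj c *\<^sub>C invol a"
    and scaleC_mult_left: "(c *\<^sub>C a) * b = c *\<^sub>C (a * b)"
    and mult_scaleC_right: "a * (c *\<^sub>C b) = c *\<^sub>C (a * b)"
    and norm_scaleC: "norm (c *\<^sub>C a) = cmod c * norm a"
    and cstar_identity: "norm (invol a * a) = (norm a)\<^sup>2"

definition clinear :: "('a::complex_vector \<Rightarrow> 'b::complex_vector) \<Rightarrow> bool" where
  "clinear f \<longleftrightarrow> (\<forall>x y. f (x + y) = f x + f y) \<and> (\<forall>c x. f (c *\<^sub>C x) = c *\<^sub>C f x)"

definition bounded_clinear ::
  "('a::{complex_vector,real_normed_vector} \<Rightarrow> 'b::{complex_vector,real_normed_vector}) \<Rightarrow> bool" where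
  "bounded_clinear f \<longleftrightarrow> clinear f \<and> (\<exists>K. \<forall>x. norm (f x) \<le> norm x * K)"

definition cadjoint :: "('a::complex_inner \<Rightarrow> 'b::complex_inner) \<Rightarrow> 'b \<Rightarrow> 'a" where
  "cadjoint T = (SOME S. \<forall>x y. cinner (S y) x = cinner y (T x))"

definition positive_op :: "('a::complex_inner \<Rightarrow> 'a) \<Rightarrow> bool" where
  "positive_op E \<longleftrightarrow> bounded_clinear E \<and> (\<forall>x. cnonneg (cinner x (E x)))"

definition has_bounded_inverse :: "('a::complex_inner \<Rightarrow> 'a) \<Rightarrow> bool" where
  "has_bounded_inverse E \<longleftrightarrow>
     (\<exists>F. bounded_clinear F \<and> E \<circ> F = id \<and> F \<circ> E = id)"

definition cspan :: "'a::complex_vector set \<Rightarrow> 'a set" where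
  "cspan S = {x. \<exists>F c. finite F \<and> F \<subseteq> S \<and> x = (\<Sum>v\<in>F. c v *\<^sub>C v)}"

definition op_valued_linear :: "('a::cstar_algebra \<Rightarrow> 'h::chilbert_space \<Rightarrow> 'h) \<Rightarrow> bool" where
  "op_valued_linear \<Phi> \<longleftrightarrow>
     (\<forall>a. bounded_clinear (\<Phi> a)) \<and>
     (\<forall>a b v. \<Phi> (a + b) v = \<Phi> a v + \<Phi> b v) \<and>
     (\<forall>c a v. \<Phi> (c *\<^sub>C a) v = c *\<^sub>C \<Phi> a v)"

text \<open>Complete positivity: for every n, the amplification \<open>\<Phi>\<^sub>n : M\<^sub>n(\<A>) \<rightarrow> M\<^sub>n(\<L>(\<H>)) = \<L>(\<H>\<^sup>n)\<close>
  maps positive matrices \<open>X = Y\<^sup>* Y\<close> (i.e. \<open>X i j = \<Sum>k. (Y k i)\<^sup>* Y k j\<close>) to positive operators on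
  \<open>\<H>\<^sup>n\<close>, i.e. \<open>\<Sum>i j. \<langle>\<xi> i, \<Phi>(X i j) \<xi> j\<rangle> \<ge> 0\<close> for all \<open>\<xi> \<in> \<H>\<^sup>n\<close>.\<close>
definition completely_positive :: "('a::cstar_algebra \<Rightarrow> 'h::chilbert_space \<Rightarrow> 'h) \<Rightarrow> bool" where
  "completely_positive \<Phi> \<longleftrightarrow>
     (\<forall>(n::nat) (Y::nat \<Rightarrow> nat \<Rightarrow> 'a) (\<xi>::nat \<Rightarrow> 'h).
        cnonneg (\<Sum>i<n. \<Sum>j<n. cinner (\<xi> i) (\<Phi> (\<Sum>k<n. invol (Y k i) * Y k j) (\<xi> j))))"

definition UCP :: "('a::cstar_algebra \<Rightarrow> 'h::chilbert_space \<Rightarrow> 'h) set" where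
  "UCP = {\<Phi>. op_valued_linear \<Phi> \<and> completely_positive \<Phi> \<and> \<Phi> 1 = id}"

definition conv_le :: "('a \<Rightarrow> 'h::real_vector \<Rightarrow> 'h) set \<Rightarrow> ('a \<Rightarrow> 'h \<Rightarrow> 'h) \<Rightarrow> ('a \<Rightarrow> 'h \<Rightarrow> 'h) \<Rightarrow> bool" where
  "conv_le C \<Phi> \<Psi> \<longleftrightarrow>
     (\<exists>\<Psi>'\<in>C. \<exists>t::real. 0 < t \<and> t \<le> 1 \<and> \<Psi> = (\<lambda>a v. t *\<^sub>R \<Phi> a v + (1 - t) *\<^sub>R \<Psi>' a v))"

definition conv_eq :: "('a \<Rightarrow> 'h::real_vector \<Rightarrow> 'h) set \<Rightarrow> ('a \<Rightarrow> 'h \<Rightarrow> 'h) \<Rightarrow> ('a \<Rightarrow> 'h \<Rightarrow> 'h) \<Rightarrow> bool" where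
  "conv_eq C \<Phi> \<Psi> \<longleftrightarrow> conv_le C \<Phi> \<Psi> \<and> conv_le C \<Psi> \<Phi>"

definition unital_star_rep :: "('a::cstar_algebra \<Rightarrow> 'm::chilbert_space \<Rightarrow> 'm) \<Rightarrow> bool" where
  "unital_star_rep \<pi> \<longleftrightarrow>
     (\<forall>a. bounded_clinear (\<pi> a)) \<and>
     (\<forall>a b v. \<pi> (a + b) v = \<pi> a v + \<pi> b v) \<and>
     (\<forall>c a v. \<pi> (c *\<^sub>C a) v = c *\<^sub>C \<pi> a v) \<and>
     (\<forall>a b. \<pi> (a * b) = \<pi> a \<circ> \<pi> b) \<and>
     (\<forall>a. \<pi> (invol a) = cadjoint (\<pi> a)) \<and>
     \<pi> 1 = id"

definition min_stinespring ::
  "('a::cstar_algebra \<Rightarrow> 'h::chilbert_space \<Rightarrow> 'h) \<Rightarrow> ('a \<Rightarrow> 'm::chilbert_space \<Rightarrow> 'm) \<Rightarrow> ('h \<Rightarrow> 'm) \<Rightarrow> bool" where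
  "min_stinespring \<Psi> \<pi> J \<longleftrightarrow>
     unital_star_rep \<pi> \<and> bounded_clinear J \<and>
     (\<forall>a. \<Psi> a = cadjoint J \<circ> \<pi> a \<circ> J) \<and>
     closure (cspan {\<pi> a (J v) | a v. True}) = UNIV"

text \<open>\<open>F(\<Psi>)\<close> relative to the fixed dilation \<open>(\<M>,\<pi>,J)\<close>.\<close>
definition F_set :: "('a::cstar_algebra \<Rightarrow> 'm::chilbert_space \<Rightarrow> 'm) \<Rightarrow> ('h::chilbert_space \<Rightarrow> 'm) \<Rightarrow> ('m \<Rightarrow> 'm) set" where
  "F_set \<pi> J = {E. positive_op E \<and> (\<forall>a. E \<circ> \<pi> a = \<pi> a \<circ> E) \<and> cadjoint J \<circ> E \<circ> J = id}"

end

theory Submission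
  imports Defs
begin

lemma cnonneg_iff: "cnonneg z \<longleftrightarrow> z = complex_of_real (Re z) \<and> 0 \<le> Re z"
  by (auto simp: cnonneg_def complex_eq_iff)

lemma scaleC_zero_left[simp]:
  fixes x y z :: "'a::complex_vector"
  shows "0 *\<^sub>C x = 0"
proof -
  have "0 *\<^sub>C x = complex_of_real 0 *\<^sub>C x" by simp
  also have "\<dots> = 0 *\<^sub>R x" by (simp only: scaleR_scaleC)
  also have "\<dots> = 0" by (rule real_vector.scale_zero_left)
  finally show ?thesis .
qed
lemma scaleC_zero_right[simp]:
  fixes x y z :: "'a::complex_vector"
  shows "c *\<^sub>C 0 = 0"
proof -
  have "c *\<^sub>C 0 = c *\<^sub>C 0 + c *\<^sub>C 0" using scaleC_add_right[of c 0 0] by simp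
  then show ?thesis by simp
qed
lemma scaleC_minus_left:
  fixes x y z :: "'a::complex_vector"
  shows "(- c) *\<^sub>C x = - (c *\<^sub>C x)"
proof -
  have "(- c) *\<^sub>C x + c *\<^sub>C x = 0" using scaleC_add_left[of "-c" c x] by simp
  then show ?thesis by (simp add: add_eq_0_iff2)
qed
lemma scaleC_minus_right:
  fixes x y z :: "'a::complex_vector"
  shows "c *\<^sub>C (- x) = - (c *\<^sub>C x)"
proof -
  have "c *\<^sub>C (- x) + c *\<^sub>C x = 0" using scaleC_add_right[of c "-x" x] by simp
  then show ?thesis by (simp add: add_eq_0_iff2)
qed
lemma scaleC_diff_right:
  fixes x y z :: "'a::complex_vector"
  shows "c *\<^sub>C (x - y) = c *\<^sub>C x - c *\<^sub>C y"
  by (simp only: diff_conv_add_uminus scaleC_add_right scaleC_minus_right)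
lemma scaleC_diff_left:
  fixes x y z :: "'a::complex_vector"
  shows "(b - c) *\<^sub>C x = b *\<^sub>C x - c *\<^sub>C x"
  by (simp only: diff_conv_add_uminus scaleC_add_left scaleC_minus_left)
lemma scaleC_sum_right:
  fixes x y z :: "'a::complex_vector"
  shows "c *\<^sub>C (sum f A) = (\<Sum>x\<in>A. c *\<^sub>C f x)"
  by (induction A rule: infinite_finite_induct) (auto simp: scaleC_add_right)
lemma scaleC_neg1:
  fixes x y z :: "'a::complex_vector"
  shows "(-1) *\<^sub>C x = - x"
  by (simp add: scaleC_minus_left scaleC_one)

lemma cinner_add_left:
  fixes x y z :: "'a::complex_inner"
  shows "cinner (x + y) z = cinner x z + cinner y z"
proof -
  have "cinner (x + y) z = cnj (cinner z (x + y))" by (rule cinner_commute)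
  also have "\<dots> = cnj (cinner z x) + cnj (cinner z y)" by (simp add: cinner_add_right)
  also have "\<dots> = cinner x z + cinner y z" using cinner_commute[of x z] cinner_commute[of y z] by simp
  finally show ?thesis .
qed
lemma cinner_scaleC_left:
  fixes x y z :: "'a::complex_inner"
  shows "cinner (c *\<^sub>C x) y = cnj c * cinner x y"
proof -
  have "cinner (c *\<^sub>C x) y = cnj (cinner y (c *\<^sub>C x))" by (rule cinner_commute)
  also have "\<dots> = cnj c * cnj (cinner y x)" by (simp add: cinner_scaleC_right)
  also have "\<dots> = cnj c * cinner x y" using cinner_commute[of x y] by simp
  finally show ?thesis .
qed
lemma cinner_zero_left[simp]:
  fixes x y z :: "'a::complex_inner"
  shows "cinner 0 y = 0"
  using cinner_add_left[of 0 0 y] by simp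
lemma cinner_zero_right[simp]:
  fixes x y z :: "'a::complex_inner"
  shows "cinner y 0 = 0"
  using cinner_add_right[of y 0 0] by simp
lemma cinner_minus_left:
  fixes x y z :: "'a::complex_inner"
  shows "cinner (- x) y = - cinner x y"
  using cinner_add_left[of "-x" x y] by (simp add: add_eq_0_iff2)
lemma cinner_minus_right:
  fixes x y z :: "'a::complex_inner"
  shows "cinner y (- x) = - cinner y x"
  using cinner_add_right[of y "-x" x] by (simp add: add_eq_0_iff2)
lemma cinner_diff_left:
  fixes x y z :: "'a::complex_inner"
  shows "cinner (x - y) z = cinner x z - cinner y z"
  by (simp only: diff_conv_add_uminus cinner_add_left cinner_minus_left)
lemma cinner_diff_right:
  fixes x y z :: "'a::complex_inner"
  shows "cinner z (x - y) = cinner z x - cinner z y"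
  by (simp only: diff_conv_add_uminus cinner_add_right cinner_minus_right)
lemma cinner_scaleR_left:
  fixes x y z :: "'a::complex_inner"
  shows "cinner (r *\<^sub>R x) y = of_real r * cinner x y"
  by (simp add: scaleR_scaleC cinner_scaleC_left)
lemma cinner_scaleR_right:
  fixes x y z :: "'a::complex_inner"
  shows "cinner y (r *\<^sub>R x) = of_real r * cinner y x"
  by (simp add: scaleR_scaleC cinner_scaleC_right)
lemma cinner_sum_left:
  fixes x y z :: "'a::complex_inner"
  shows "cinner (sum f A) y = (\<Sum>x\<in>A. cinner (f x) y)"
  by (induction A rule: infinite_finite_induct) (auto simp: cinner_add_left)
lemma cinner_sum_right:
  fixes x y z :: "'a::complex_inner"
  shows "cinner y (sum f A) = (\<Sum>x\<in>A. cinner y (f x))"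
  by (induction A rule: infinite_finite_induct) (auto simp: cinner_add_right)
lemma cinner_sum_list_left:
  fixes x y z :: "'a::complex_inner"
  shows "cinner (sum_list (map f xs)) y = (\<Sum>x\<leftarrow>xs. cinner (f x) y)"
  by (induction xs) (auto simp: cinner_add_left)
lemma cinner_sum_list_right:
  fixes x y z :: "'a::complex_inner"
  shows "cinner y (sum_list (map f xs)) = (\<Sum>x\<leftarrow>xs. cinner y (f x))"
  by (induction xs) (auto simp: cinner_add_right)
lemma cinner_self:
  fixes x y z :: "'a::complex_inner"
  shows "cinner x x = complex_of_real ((norm x)\<^sup>2)"
proof -
  have "cnonneg (cinner x x)" by (rule cinner_nonneg)
  then show ?thesis using norm_eq_sqrt_cinner[of x]
    by (auto simp: cnonneg_def complex_eq_iff)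
qed
lemma Re_cinner_self:
  fixes x y z :: "'a::complex_inner"
  shows "Re (cinner x x) = (norm x)\<^sup>2"
  by (simp add: cinner_self)
lemma cinner_self_eq_0:
  fixes x y z :: "'a::complex_inner"
  shows "cinner x x = 0 \<longleftrightarrow> x = 0"
  by (simp add: cinner_self)
lemma cnorm_scaleC:
  fixes x :: "'a::complex_inner"
  shows "norm (c *\<^sub>C x) = cmod c * norm x"
proof -
  have cc: "cnj c * c = complex_of_real ((cmod c)\<^sup>2)"
    using complex_norm_square[of c] by (simp add: mult.commute)
  have "(norm (c *\<^sub>C x))\<^sup>2 = Re (cinner (c *\<^sub>C x) (c *\<^sub>C x))" by (rule Re_cinner_self[symmetric])
  also have "\<dots> = Re (cnj c * c * cinner x x)"
    by (simp only: cinner_scaleC_left cinner_scaleC_right mult.assoc mult.left_commute)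
  also have "\<dots> = (cmod c * norm x)\<^sup>2"
    unfolding cc cinner_self by (simp add: power_mult_distrib)
  finally show ?thesis by (simp add: power2_eq_iff_nonneg)
qed
lemma cinner_ext_right:
  fixes x y z :: "'a::complex_inner"
  shows "(\<And>v. cinner v x = cinner v y) \<Longrightarrow> x = y"
proof -
  assume "\<And>v. cinner v x = cinner v y"
  then have "cinner (x - y) (x - y) = 0" by (simp add: cinner_diff_right)
  then show "x = y" by (simp add: cinner_self_eq_0)
qed
lemma cinner_ext_left:
  fixes x y z :: "'a::complex_inner"
  shows "(\<And>v. cinner x v = cinner y v) \<Longrightarrow> x = y"
proof -
  assume "\<And>v. cinner x v = cinner y v"
  then have "cinner (x - y) (x - y) = 0" by (simp add: cinner_diff_left)
  then show "x = y" by (simp add: cinner_self_eq_0)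
qed


lemma quad_disc:
  fixes a b k :: real
  assumes "\<And>s. 0 \<le> a - 2 * s * k + s\<^sup>2 * k * b" and "0 \<le> k" and "0 \<le> b"
  shows "k \<le> a * b"
proof (cases "k = 0")
  case True
  have "0 \<le> a" using assms(1)[of 0] by simp
  then show ?thesis using True assms by simp
next
  case False
  then have kp: "k > 0" using assms by simp
  show ?thesis
  proof (cases "b = 0")
    case True
    have "0 \<le> a - 2 * ((a + 1) / k) * k" using assms(1)[of "(a+1)/k"] True by simp
    also have "\<dots> = a - 2 * (a + 1)" using kp by simp
    finally have "a \<le> -2" by simp
    moreover have "0 \<le> a" using assms(1)[of 0] by simp
    ultimately show ?thesis by simp
  next
    case False
    then have bp: "b > 0" using assms by simp
    have "0 \<le> a - 2 * (1/b) * k + (1/b)\<^sup>2 * k * b" by (rule assms(1))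
    also have "\<dots> = a - k / b" using bp by (simp add: power2_eq_square field_simps)
    finally have "k / b \<le> a" by simp
    then show ?thesis using bp by (simp add: field_simps)
  qed
qed

locale sesq =
  fixes add :: "'v \<Rightarrow> 'v \<Rightarrow> 'v" and scal :: "complex \<Rightarrow> 'v \<Rightarrow> 'v"
    and B :: "'v \<Rightarrow> 'v \<Rightarrow> complex"
  assumes add_right: "B x (add y z) = B x y + B x z"
    and add_left: "B (add x y) z = B x z + B y z"
    and scal_right: "B x (scal c y) = c * B x y"
    and scal_left: "B (scal c x) y = cnj c * B x y"
    and pos: "cnonneg (B x x)"
begin

lemma real_self: "B x x = complex_of_real (Re (B x x))" and nonneg_self: "0 \<le> Re (B x x)"
  using pos[of x] by (auto simp: cnonneg_def complex_eq_iff)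

lemma herm: "B y x = cnj (B x y)"
proof -
  have 1: "Im (B (add x y) (add x y)) = 0" using pos by (simp add: cnonneg_def)
  have 2: "Im (B (add x (scal \<i> y)) (add x (scal \<i> y))) = 0" using pos by (simp add: cnonneg_def)
  have ix: "Im (B x x) = 0" "Im (B y y) = 0" using pos by (auto simp: cnonneg_def)
  from 1 have a: "Im (B x y) + Im (B y x) = 0"
    using ix by (simp add: add_left add_right)
  from 2 have b: "Re (B x y) - Re (B y x) = 0"
    using ix by (simp add: add_left add_right scal_left scal_right)
  show ?thesis using a b by (simp add: complex_eq_iff)
qed

lemma expand:
  "B (add x (scal \<mu> y)) (add x (scal \<mu> y)) = B x x + \<mu> * B x y + cnj \<mu> * cnj (B x y) + (cmod \<mu>)\<^sup>2 * B y y"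
proof -
  have "B (add x (scal \<mu> y)) (add x (scal \<mu> y)) = B x x + \<mu> * B x y + cnj \<mu> * B y x + cnj \<mu> * \<mu> * B y y"
    by (simp add: add_left add_right scal_left scal_right algebra_simps)
  also have "cnj \<mu> * \<mu> = (cmod \<mu>)\<^sup>2"
    using complex_norm_square[of \<mu>] by (simp add: mult.commute)
  finally show ?thesis using herm[of x y] by simp
qed

lemma cauchy_schwarz: "(cmod (B x y))\<^sup>2 \<le> Re (B x x) * Re (B y y)"
proof -
  let ?w = "B x y"
  have "0 \<le> Re (B x x) - 2 * s * (cmod ?w)\<^sup>2 + s\<^sup>2 * (cmod ?w)\<^sup>2 * Re (B y y)" for s :: real
  proof -
    let ?\<mu> = "- (complex_of_real s * cnj ?w)"
    have "0 \<le> Re (B (add x (scal ?\<mu> y)) (add x (scal ?\<mu> y)))" by (rule nonneg_self)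
    also have "\<dots> = Re (B x x) - 2 * s * (cmod ?w)\<^sup>2 + s\<^sup>2 * (cmod ?w)\<^sup>2 * Re (B y y)"
    proof -
      have m1: "?\<mu> * ?w = - complex_of_real (s * (cmod ?w)\<^sup>2)"
        using complex_norm_square[of ?w] by (simp add: mult.commute mult.left_commute)
      have m2: "cnj ?\<mu> * cnj ?w = - complex_of_real (s * (cmod ?w)\<^sup>2)"
        using complex_norm_square[of ?w] by (simp add: mult.commute mult.left_commute)
      have m3: "(cmod ?\<mu>)\<^sup>2 = s\<^sup>2 * (cmod ?w)\<^sup>2"
        by (simp add: norm_mult power_mult_distrib)
      show ?thesis unfolding expand m1 m2 m3 by simp
    qed
    finally show ?thesis .
  qed
  then show ?thesis using quad_disc[of "Re (B x x)" "(cmod ?w)\<^sup>2" "Re (B y y)"] nonneg_self by simp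
qed

lemma cs_sqrt: "cmod (B x y) \<le> sqrt (Re (B x x)) * sqrt (Re (B y y))"
  using cauchy_schwarz[of x y] by (metis real_sqrt_abs real_sqrt_le_mono real_sqrt_mult abs_norm_cancel)

lemma null_left: "Re (B x x) = 0 \<Longrightarrow> B x y = 0"
  using cauchy_schwarz[of x y] by simp

end

interpretation ci: sesq "(+)" "scaleC" "cinner :: 'a::complex_inner \<Rightarrow> _"
  by unfold_locales (auto simp: cinner_add_left cinner_add_right cinner_scaleC_left cinner_scaleC_right cinner_nonneg)

lemma cinner_cs: "cmod (cinner x y) \<le> norm x * norm (y::'a::complex_inner)"
  using ci.cs_sqrt[of x y] by (simp add: Re_cinner_self)


lemma parallelogram:
  fixes a b :: "'a::complex_inner"
  shows "(norm (a + b))\<^sup>2 + (norm (a - b))\<^sup>2 = 2 * (norm a)\<^sup>2 + 2 * (norm b)\<^sup>2"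
proof -
  have "(norm (a + b))\<^sup>2 + (norm (a - b))\<^sup>2 = Re (cinner (a+b) (a+b)) + Re (cinner (a-b) (a-b))"
    by (simp only: Re_cinner_self)
  also have "\<dots> = 2 * Re (cinner a a) + 2 * Re (cinner b b)"
    by (simp add: cinner_add_left cinner_add_right cinner_diff_left cinner_diff_right)
  finally show ?thesis by (simp only: Re_cinner_self)
qed

lemma small_bound:
  fixes d a b \<delta> e t :: real
  assumes "0 \<le> d" "0 \<le> a" "a < \<delta>" "0 \<le> b" "b < \<delta>" "\<delta> \<le> 1" "\<delta> * (8 * d + 5) \<le> e\<^sup>2"
    and "t\<^sup>2 \<le> 2 * (d + a)\<^sup>2 + 2 * (d + b)\<^sup>2 - 4 * d\<^sup>2" "0 \<le> t" "0 < e"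
  shows "t < e"
proof -
  have a2: "a\<^sup>2 \<le> a"
  proof -
    have "a * a \<le> a * 1" using assms by (intro mult_left_mono) auto
    then show ?thesis by (simp add: power2_eq_square)
  qed
  have b2: "b\<^sup>2 \<le> b"
  proof -
    have "b * b \<le> b * 1" using assms by (intro mult_left_mono) auto
    then show ?thesis by (simp add: power2_eq_square)
  qed
  have "2 * (d + a)\<^sup>2 + 2 * (d + b)\<^sup>2 - 4 * d\<^sup>2 = 4 * d * a + 2 * a\<^sup>2 + 4 * d * b + 2 * b\<^sup>2"
    by (simp add: power2_eq_square algebra_simps)
  also have "\<dots> \<le> 4 * d * a + 2 * a + 4 * d * b + 2 * b" using a2 b2 by simp
  also have "\<dots> = (a + b) * (4 * d + 2)" by (simp add: algebra_simps)
  also have "\<dots> < (2 * \<delta>) * (4 * d + 2)"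
    using assms by (intro mult_strict_right_mono) auto
  also have "\<dots> \<le> \<delta> * (8 * d + 5)" using assms by (simp add: algebra_simps)
  finally have "t\<^sup>2 < e\<^sup>2" using assms by linarith
  then show ?thesis using assms by (simp add: power_less_imp_less_base)
qed

lemma closest_point:
  fixes V :: "'a::chilbert_space set"
  assumes cl: "closed V" and ne: "V \<noteq> {}" and mid: "\<And>u v. u \<in> V \<Longrightarrow> v \<in> V \<Longrightarrow> (1/2) *\<^sub>R (u + v) \<in> V"
  shows "\<exists>p\<in>V. \<forall>v\<in>V. norm (y - p) \<le> norm (y - v)"
proof -
  define D where "D = (\<lambda>v. norm (y - v)) ` V"
  define d where "d = Inf D"
  have bdd: "bdd_below D" unfolding D_def by (rule bdd_belowI[of _ 0]) auto
  have Dne: "D \<noteq> {}" using ne by (simp add: D_def)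
  have dle: "d \<le> norm (y - v)" if "v \<in> V" for v
    unfolding d_def using bdd that by (auto simp: D_def intro: cInf_lower)
  have d0: "0 \<le> d" unfolding d_def using Dne by (auto simp: D_def intro!: cInf_greatest)
  have "\<exists>v\<in>V. norm (y - v) < d + inverse (real (Suc n))" for n
  proof -
    have "Inf D < d + inverse (real (Suc n))" by (simp add: d_def)
    from cInf_lessD[OF Dne this] show ?thesis by (auto simp: D_def)
  qed
  then obtain x where xV: "\<And>n. x n \<in> V" and xd: "\<And>n. norm (y - x n) < d + inverse (real (Suc n))"
    by metis
  have key: "(norm (x m - x n))\<^sup>2 \<le> 2 * (d + inverse (real (Suc m)))\<^sup>2 + 2 * (d + inverse (real (Suc n)))\<^sup>2 - 4 * d\<^sup>2" for m n
  proof -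
    let ?a = "y - x m" and ?b = "y - x n"
    have mV: "(1/2) *\<^sub>R (x m + x n) \<in> V" using mid xV by blast
    have "?a + ?b = 2 *\<^sub>R (y - (1/2) *\<^sub>R (x m + x n))" by (simp add: algebra_simps scaleR_2)
    then have "norm (?a + ?b) = 2 * norm (y - (1/2) *\<^sub>R (x m + x n))" by simp
    then have "2 * d \<le> norm (?a + ?b)" using dle[OF mV] by simp
    then have 1: "4 * d\<^sup>2 \<le> (norm (?a + ?b))\<^sup>2" using d0
      by (metis mult_2 power2_eq_square four_x_squared power_mono zero_le_mult_iff zero_le_numeral order_refl)
    have 2: "(norm (?a - ?b))\<^sup>2 = (norm (x m - x n))\<^sup>2" by (simp add: norm_minus_commute)
    have 3: "(norm ?a)\<^sup>2 \<le> (d + inverse (real (Suc m)))\<^sup>2"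
      using xd[of m] by (intro power_mono) auto
    have 4: "(norm ?b)\<^sup>2 \<le> (d + inverse (real (Suc n)))\<^sup>2"
      using xd[of n] by (intro power_mono) auto
    show ?thesis using parallelogram[of ?a ?b] 1 2 3 4 by linarith
  qed
  have "Cauchy x"
  proof (rule CauchyI)
    fix e :: real assume e: "0 < e"
    define \<delta> where "\<delta> = min 1 (e\<^sup>2 / (8 * d + 5))"
    have \<delta>0: "0 < \<delta>" using e d0 by (simp add: \<delta>_def)
    have "\<delta> \<le> e\<^sup>2 / (8 * d + 5)" by (simp add: \<delta>_def)
    then have \<delta>1b: "\<delta> * (8 * d + 5) \<le> e\<^sup>2"
      using d0 by (simp add: pos_le_divide_eq)
    have \<delta>1: "\<delta> \<le> 1" "\<delta> * (8 * d + 5) \<le> e\<^sup>2"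
      using \<delta>1b by (simp_all add: \<delta>_def)
    obtain N where N: "inverse (real (Suc N)) < \<delta>"
      using reals_Archimedean[OF \<delta>0] by auto
    have "norm (x m - x n) < e" if "m \<ge> N" "n \<ge> N" for m n
    proof -
      have "inverse (real (Suc m)) \<le> inverse (real (Suc N))" "inverse (real (Suc n)) \<le> inverse (real (Suc N))"
        using that by (auto intro!: le_imp_inverse_le)
      then have "inverse (real (Suc m)) < \<delta>" "inverse (real (Suc n)) < \<delta>"
        using N by linarith+
      then show ?thesis
        using small_bound[OF d0 _ _ _ _ \<delta>1(1) \<delta>1(2) key[of m n] norm_ge_zero e] by simp
    qed
    then show "\<exists>M. \<forall>m\<ge>M. \<forall>n\<ge>M. norm (x m - x n) < e" by blast
  qed
  then obtain p where p: "x \<longlonglongrightarrow> p" using Cauchy_convergent_iff convergent_def by blast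
  have pV: "p \<in> V" using closed_sequentially[OF cl xV p] .
  have "norm (y - p) \<le> d"
  proof (rule LIMSEQ_le)
    show "(\<lambda>n. norm (y - x n)) \<longlonglongrightarrow> norm (y - p)"
      by (intro tendsto_intros p)
    show "(\<lambda>n. d + inverse (real (Suc n))) \<longlonglongrightarrow> d"
      using tendsto_add[OF tendsto_const LIMSEQ_inverse_real_of_nat, of d] by simp
    show "\<exists>N. \<forall>n\<ge>N. norm (y - x n) \<le> d + inverse (real (Suc n))"
      using xd less_imp_le by blast
  qed
  then show ?thesis using pV dle by force
qed

lemma ci_expand_special:
  fixes x y :: "'a::complex_inner"
  shows "Re (cinner (x + (- (complex_of_real s * cnj (cinner x y))) *\<^sub>C y) (x + (- (complex_of_real s * cnj (cinner x y))) *\<^sub>C y))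
    = (norm x)\<^sup>2 - 2 * s * (cmod (cinner x y))\<^sup>2 + s\<^sup>2 * (cmod (cinner x y))\<^sup>2 * (norm y)\<^sup>2"
proof -
  let ?w = "cinner x y"
  let ?\<mu> = "- (complex_of_real s * cnj ?w)"
  have m1: "?\<mu> * ?w = - complex_of_real (s * (cmod ?w)\<^sup>2)"
    using complex_norm_square[of ?w] by (simp add: mult.commute mult.left_commute)
  have m2: "cnj ?\<mu> * cnj ?w = - complex_of_real (s * (cmod ?w)\<^sup>2)"
    using complex_norm_square[of ?w] by (simp add: mult.commute mult.left_commute)
  have m3: "(cmod ?\<mu>)\<^sup>2 = s\<^sup>2 * (cmod ?w)\<^sup>2"
    by (simp add: norm_mult power_mult_distrib)
  show ?thesis unfolding ci.expand m1 m2 m3 by (simp add: Re_cinner_self)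
qed

lemma projection:
  fixes V :: "'a::chilbert_space set"
  assumes cl: "closed V" and z: "0 \<in> V" and ad: "\<And>u v. u \<in> V \<Longrightarrow> v \<in> V \<Longrightarrow> u + v \<in> V"
    and sc: "\<And>c v. v \<in> V \<Longrightarrow> c *\<^sub>C v \<in> V"
  shows "\<exists>p\<in>V. \<forall>v\<in>V. cinner v (y - p) = 0"
proof -
  have mid: "(1/2) *\<^sub>R (u + v) \<in> V" if "u \<in> V" "v \<in> V" for u v
    using sc ad that by (simp add: scaleR_scaleC)
  obtain p where pV: "p \<in> V" and pmin: "\<And>v. v \<in> V \<Longrightarrow> norm (y - p) \<le> norm (y - v)"
    using closest_point[OF cl _ mid, of y] z by blast
  have "cinner v (y - p) = 0" if vV: "v \<in> V" for v
  proof -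
    let ?z = "y - p"
    let ?w = "cinner ?z v"
    have "0 \<le> 0 - 2 * s * (cmod ?w)\<^sup>2 + s\<^sup>2 * (cmod ?w)\<^sup>2 * (norm v)\<^sup>2" for s
    proof -
      let ?\<mu> = "- (complex_of_real s * cnj ?w)"
      have inV: "p - ?\<mu> *\<^sub>C v \<in> V" using ad[OF pV sc[OF vV, of "- ?\<mu>"]]
        by (simp add: scaleC_minus_left)
      have "(norm ?z)\<^sup>2 \<le> (norm (y - (p - ?\<mu> *\<^sub>C v)))\<^sup>2"
        using pmin[OF inV] by (simp add: power_mono)
      also have "y - (p - ?\<mu> *\<^sub>C v) = ?z + ?\<mu> *\<^sub>C v" by (simp add: algebra_simps)
      also have "(norm (?z + ?\<mu> *\<^sub>C v))\<^sup>2 = (norm ?z)\<^sup>2 - 2 * s * (cmod ?w)\<^sup>2 + s\<^sup>2 * (cmod ?w)\<^sup>2 * (norm v)\<^sup>2"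
        using ci_expand_special[where s=s and x="?z" and y=v] by (simp add: Re_cinner_self)
      finally show ?thesis by simp
    qed
    then have "(cmod ?w)\<^sup>2 \<le> 0 * (norm v)\<^sup>2"
      by (intro quad_disc) auto
    then have "?w = 0" by simp
    then show ?thesis using cinner_commute[of v ?z] by simp
  qed
  then show ?thesis using pV by blast
qed

lemma lipschitz_cont:
  fixes f :: "'a::real_normed_vector \<Rightarrow> 'b::real_normed_vector"
  assumes "\<And>x y. norm (f x - f y) \<le> K * norm (x - y)"
  shows "continuous_on UNIV f"
proof -
  have "norm (f x - f y) \<le> max K 0 * norm (x - y)" for x y
    using assms[of x y] by (meson max.cobounded1 mult_right_mono norm_ge_zero order_trans)
  then show ?thesis
    by (intro lipschitz_on_continuous_on[of "max K 0"]) (auto simp: lipschitz_on_def dist_norm)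
qed


lemma bclin_add: "bounded_clinear T \<Longrightarrow> T (x + y) = T x + T y"
  by (simp add: bounded_clinear_def clinear_def)
lemma bclin_scaleC: "bounded_clinear T \<Longrightarrow> T (c *\<^sub>C x) = c *\<^sub>C T x"
  by (simp add: bounded_clinear_def clinear_def)
lemma bclin_zero: "bounded_clinear T \<Longrightarrow> T 0 = 0"
  using bclin_scaleC[of T 0 0] by simp
lemma bclin_minus: "bounded_clinear T \<Longrightarrow> T (- x) = - T x"
  using bclin_scaleC[of T "-1" x] by (simp add: scaleC_neg1)
lemma bclin_diff: "bounded_clinear T \<Longrightarrow> T (x - y) = T x - T y"
  by (simp add: diff_conv_add_uminus bclin_add bclin_minus del: add_uminus_conv_diff)
lemma bclin_scaleR: "bounded_clinear T \<Longrightarrow> T (r *\<^sub>R x) = r *\<^sub>R T x"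
  by (simp add: scaleR_scaleC bclin_scaleC)
lemma bclin_sum: "bounded_clinear T \<Longrightarrow> T (sum f A) = (\<Sum>a\<in>A. T (f a))"
  by (induction A rule: infinite_finite_induct) (auto simp: bclin_add bclin_zero)
lemma bclin_sum_list: "bounded_clinear T \<Longrightarrow> T (sum_list (map f xs)) = (\<Sum>a\<leftarrow>xs. T (f a))"
  by (induction xs) (auto simp: bclin_add bclin_zero)
lemma bclin_bound: "bounded_clinear T \<Longrightarrow> \<exists>K>0. \<forall>x. norm (T x) \<le> K * norm x"
proof -
  assume "bounded_clinear T"
  then obtain K where K: "\<And>x. norm (T x) \<le> norm x * K" by (auto simp: bounded_clinear_def)
  have "norm (T x) \<le> (max K 0 + 1) * norm x" for x
  proof -
    have "norm x * K \<le> norm x * (max K 0 + 1)" by (intro mult_left_mono) auto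
    then show ?thesis using K[of x] by (simp add: mult.commute)
  qed
  then show ?thesis by (intro exI[of _ "max K 0 + 1"]) auto
qed
lemma bclin_cont: "bounded_clinear T \<Longrightarrow> continuous_on UNIV T"
proof -
  assume b: "bounded_clinear T"
  then obtain K where K: "\<And>x. norm (T x) \<le> K * norm x" using bclin_bound by blast
  show ?thesis by (rule lipschitz_cont[of T K]) (simp add: K bclin_diff[OF b, symmetric])
qed
lemma bclin_tendsto: "bounded_clinear T \<Longrightarrow> (X \<longlongrightarrow> l) F \<Longrightarrow> ((\<lambda>n. T (X n)) \<longlongrightarrow> T l) F"
  using bclin_cont continuous_on_tendsto_compose[of UNIV T X l F] by auto

lemma riesz:
  fixes f :: "'a::chilbert_space \<Rightarrow> complex"
  assumes add: "\<And>x y. f (x + y) = f x + f y" and sc: "\<And>c x. f (c *\<^sub>C x) = c * f x"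
    and bd: "\<And>x. cmod (f x) \<le> K * norm x"
  shows "\<exists>u. \<forall>x. f x = cinner u x"
proof -
  have f0: "f 0 = 0" using sc[of 0 0] by simp
  have fm: "f (- x) = - f x" for x using sc[of "-1" x] by (simp add: scaleC_neg1)
  have fd: "f (x - y) = f x - f y" for x y using add[of x "-y"] fm[of y] by simp
  have cont: "continuous_on UNIV f"
    by (rule lipschitz_cont[of f K]) (simp add: fd[symmetric] bd)
  have clV: "closed {x. f x = 0}"
    by (rule closed_Collect_eq[OF cont continuous_on_const])
  show ?thesis
  proof (cases "\<forall>x. f x = 0")
    case True
    then show ?thesis by (intro exI[of _ 0]) simp
  next
    case False
    then obtain y where fy: "f y \<noteq> 0" by blast
    obtain p where pV: "f p = 0" and orth: "\<And>v. f v = 0 \<Longrightarrow> cinner v (y - p) = 0"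
      using projection[OF clV, of y] f0 add sc by auto
    define z where "z = y - p"
    have fz: "f z \<noteq> 0" using fy pV by (simp add: z_def fd)
    have z0: "z \<noteq> 0" using fz f0 by auto
    have czz: "cinner z z \<noteq> 0" using z0 cinner_self_eq_0 by auto
    have "f x = cinner ((cnj (f z / cinner z z)) *\<^sub>C z) x" for x
    proof -
      let ?w = "f x *\<^sub>C z - f z *\<^sub>C x"
      have "f ?w = 0" by (simp add: fd sc mult.commute)
      then have "cinner ?w z = 0" using orth z_def by blast
      then have "cinner z ?w = 0" using cinner_commute[of z ?w] by simp
      then have "f x * cinner z z = f z * cinner z x"
        by (simp add: cinner_diff_right cinner_scaleC_right)
      then show ?thesis using czz
        by (simp add: cinner_scaleC_left field_simps)
    qed
    then show ?thesis by blast
  qed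
qed

lemma adjoint_prop:
  fixes T :: "'a::chilbert_space \<Rightarrow> 'b::complex_inner"
  assumes b: "bounded_clinear T"
  shows "cinner (cadjoint T y) x = cinner y (T x)"
proof -
  obtain K where K: "\<And>x. norm (T x) \<le> K * norm x" using bclin_bound[OF b] by blast
  have "\<forall>y. \<exists>u. \<forall>x. cinner y (T x) = cinner u x"
  proof
    fix y
    show "\<exists>u. \<forall>x. cinner y (T x) = cinner u x"
    proof (rule riesz[where K = "norm y * K"])
      show "cinner y (T (x1 + x2)) = cinner y (T x1) + cinner y (T x2)" for x1 x2
        by (simp add: bclin_add[OF b] cinner_add_right)
      show "cinner y (T (c *\<^sub>C x)) = c * cinner y (T x)" for c x
        by (simp add: bclin_scaleC[OF b] cinner_scaleC_right)
      show "cmod (cinner y (T x)) \<le> norm y * K * norm x" for x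
        using cinner_cs[of y "T x"] K[of x] by (metis mult.assoc mult_left_mono norm_ge_zero order_trans)
    qed
  qed
  then have "\<exists>S. \<forall>x y. cinner (S y) x = cinner y (T x)" by metis
  then have "\<forall>x y. cinner (cadjoint T y) x = cinner y (T x)"
    unfolding cadjoint_def by (rule someI_ex)
  then show ?thesis by blast
qed

lemma adjoint_prop2:
  fixes T :: "'a::chilbert_space \<Rightarrow> 'b::complex_inner"
  assumes b: "bounded_clinear T"
  shows "cinner x (cadjoint T y) = cinner (T x) y"
  using adjoint_prop[OF b, of y x] cinner_commute[of x "cadjoint T y"] cinner_commute[of "T x" y] by simp


lemma cnonneg_add: "cnonneg a \<Longrightarrow> cnonneg b \<Longrightarrow> cnonneg (a + b)"
  by (simp add: cnonneg_def)
lemma cnonneg_0[simp]: "cnonneg 0"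
  by (simp add: cnonneg_def)
lemma cnonneg_sum: "(\<And>i. i \<in> A \<Longrightarrow> cnonneg (f i)) \<Longrightarrow> cnonneg (sum f A)"
  by (induction A rule: infinite_finite_induct) (auto intro: cnonneg_add)
lemma cnonneg_scale: "0 \<le> r \<Longrightarrow> cnonneg z \<Longrightarrow> cnonneg (complex_of_real r * z)"
  by (simp add: cnonneg_def)
lemma scaleR_scaleC_commute:
  fixes x :: "'a::complex_vector"
  shows "r *\<^sub>R (c *\<^sub>C x) = c *\<^sub>C (r *\<^sub>R x)"
  by (simp add: scaleR_scaleC scaleC_scaleC mult.commute)

lemma bclin_lincomb:
  fixes f g :: "'a::complex_inner \<Rightarrow> 'b::complex_inner"
  assumes f: "bounded_clinear f" and g: "bounded_clinear g"
  shows "bounded_clinear (\<lambda>x. a *\<^sub>R f x + b *\<^sub>R g x)"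
proof -
  obtain Kf where Kf: "\<And>x. norm (f x) \<le> Kf * norm x" using bclin_bound[OF f] by blast
  obtain Kg where Kg: "\<And>x. norm (g x) \<le> Kg * norm x" using bclin_bound[OF g] by blast
  have "norm (a *\<^sub>R f x + b *\<^sub>R g x) \<le> norm x * (\<bar>a\<bar> * Kf + \<bar>b\<bar> * Kg)" for x
  proof -
    have "norm (a *\<^sub>R f x + b *\<^sub>R g x) \<le> \<bar>a\<bar> * norm (f x) + \<bar>b\<bar> * norm (g x)"
      by (metis norm_scaleR norm_triangle_ineq)
    also have "\<dots> \<le> \<bar>a\<bar> * (Kf * norm x) + \<bar>b\<bar> * (Kg * norm x)"
      using Kf[of x] Kg[of x] by (intro add_mono mult_left_mono) auto
    finally show ?thesis by (simp add: algebra_simps)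
  qed
  moreover have "clinear (\<lambda>x. a *\<^sub>R f x + b *\<^sub>R g x)"
    unfolding clinear_def
    by (simp add: bclin_add[OF f] bclin_add[OF g] bclin_scaleC[OF f] bclin_scaleC[OF g]
        scaleR_scaleC_commute scaleC_add_right algebra_simps)
  ultimately show ?thesis unfolding bounded_clinear_def by blast
qed

lemma bclin_id: "bounded_clinear (id :: 'a::complex_inner \<Rightarrow> 'a)"
  unfolding bounded_clinear_def clinear_def by (auto intro!: exI[of _ 1])

lemma rep_bclin: "unital_star_rep \<pi> \<Longrightarrow> bounded_clinear (\<pi> a)"
  by (simp add: unital_star_rep_def)
lemma rep_add: "unital_star_rep \<pi> \<Longrightarrow> \<pi> (a + b) v = \<pi> a v + \<pi> b v"
  by (simp add: unital_star_rep_def)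
lemma rep_mult: "unital_star_rep \<pi> \<Longrightarrow> \<pi> (a * b) v = \<pi> a (\<pi> b v)"
  by (simp add: unital_star_rep_def)
lemma rep_invol: "unital_star_rep \<pi> \<Longrightarrow> \<pi> (invol a) = cadjoint (\<pi> a)"
  by (simp add: unital_star_rep_def)
lemma rep_one: "unital_star_rep \<pi> \<Longrightarrow> \<pi> 1 v = v"
  by (simp add: unital_star_rep_def)
lemma rep_scaleC: "unital_star_rep \<pi> \<Longrightarrow> \<pi> (c *\<^sub>C a) v = c *\<^sub>C \<pi> a v"
  by (simp add: unital_star_rep_def)
lemma rep_zero: "unital_star_rep \<pi> \<Longrightarrow> \<pi> 0 v = 0"
  using rep_scaleC[of \<pi> 0 0 v] by simp
lemma rep_sum: "unital_star_rep \<pi> \<Longrightarrow> \<pi> (sum f A) v = (\<Sum>a\<in>A. \<pi> (f a) v)"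
  by (induction A rule: infinite_finite_induct) (auto simp: rep_add rep_zero)

lemma cp_form:
  fixes \<pi> :: "'a::cstar_algebra \<Rightarrow> 'm::chilbert_space \<Rightarrow> 'm"
  assumes rep: "unital_star_rep \<pi>" and G: "bounded_clinear G"
    and comm: "\<And>a x. G (\<pi> a x) = \<pi> a (G x)" and pos: "\<And>x. cnonneg (cinner x (G x))"
  shows "cnonneg (\<Sum>i<n. \<Sum>j<n. cinner (u i) (\<pi> (\<Sum>k<n. invol (Y k i) * Y k j) (G (u j))))"
proof -
  have "(\<Sum>i<n. \<Sum>j<n. cinner (u i) (\<pi> (\<Sum>k<n. invol (Y k i) * Y k j) (G (u j))))
      = (\<Sum>i<n. \<Sum>j<n. \<Sum>k<n. cinner (\<pi> (Y k i) (u i)) (G (\<pi> (Y k j) (u j))))"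
  proof (intro sum.cong refl)
    fix i j
    have "cinner (u i) (\<pi> (\<Sum>k<n. invol (Y k i) * Y k j) (G (u j)))
        = (\<Sum>k<n. cinner (u i) (cadjoint (\<pi> (Y k i)) (\<pi> (Y k j) (G (u j)))))"
      by (simp add: rep_sum[OF rep] cinner_sum_right rep_mult[OF rep] rep_invol[OF rep])
    also have "\<dots> = (\<Sum>k<n. cinner (\<pi> (Y k i) (u i)) (G (\<pi> (Y k j) (u j))))"
      by (simp add: adjoint_prop2[OF rep_bclin[OF rep]] comm)
    finally show "cinner (u i) (\<pi> (\<Sum>k<n. invol (Y k i) * Y k j) (G (u j)))
        = (\<Sum>k<n. cinner (\<pi> (Y k i) (u i)) (G (\<pi> (Y k j) (u j))))" .
  qed
  also have "\<dots> = (\<Sum>i<n. \<Sum>k<n. \<Sum>j<n. cinner (\<pi> (Y k i) (u i)) (G (\<pi> (Y k j) (u j))))"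
    by (rule sum.cong[OF refl], rule sum.swap)
  also have "\<dots> = (\<Sum>k<n. \<Sum>i<n. \<Sum>j<n. cinner (\<pi> (Y k i) (u i)) (G (\<pi> (Y k j) (u j))))"
    by (rule sum.swap)
  also have "\<dots> = (\<Sum>k<n. cinner (\<Sum>i<n. \<pi> (Y k i) (u i)) (G (\<Sum>j<n. \<pi> (Y k j) (u j))))"
    by (simp add: cinner_sum_left cinner_sum_right bclin_sum[OF G]) (rule sum.cong[OF refl], rule sum.swap)
  finally show ?thesis using pos by (simp add: cnonneg_sum)
qed


lemma ucp_bclin: "\<Theta> \<in> UCP \<Longrightarrow> bounded_clinear (\<Theta> a)"
  by (simp add: UCP_def op_valued_linear_def)
lemma ucp_add: "\<Theta> \<in> UCP \<Longrightarrow> \<Theta> (a + b) v = \<Theta> a v + \<Theta> b v"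
  by (simp add: UCP_def op_valued_linear_def)
lemma ucp_scaleC: "\<Theta> \<in> UCP \<Longrightarrow> \<Theta> (c *\<^sub>C a) v = c *\<^sub>C \<Theta> a v"
  by (simp add: UCP_def op_valued_linear_def)
lemma ucp_one: "\<Theta> \<in> UCP \<Longrightarrow> \<Theta> 1 v = v"
  by (simp add: UCP_def)
lemma ucp_cp: "\<Theta> \<in> UCP \<Longrightarrow> completely_positive \<Theta>"
  by (simp add: UCP_def)

lemma conv_le_dil:
  fixes \<Theta>1 \<Theta>2 :: "'a::cstar_algebra \<Rightarrow> 'h::chilbert_space \<Rightarrow> 'h"
    and \<pi> :: "'a \<Rightarrow> 'm::chilbert_space \<Rightarrow> 'm" and J :: "'h \<Rightarrow> 'm"
  assumes rep: "unital_star_rep \<pi>" and J: "bounded_clinear J"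
    and U1: "\<Theta>1 \<in> UCP" and U2: "\<Theta>2 \<in> UCP"
    and d1: "\<And>a. \<Theta>1 a = cadjoint J \<circ> \<pi> a \<circ> G1 \<circ> J"
    and d2: "\<And>a. \<Theta>2 a = cadjoint J \<circ> \<pi> a \<circ> G2 \<circ> J"
    and G1: "bounded_clinear G1" and G2: "bounded_clinear G2"
    and c1: "\<And>a x. G1 (\<pi> a x) = \<pi> a (G1 x)" and c2: "\<And>a x. G2 (\<pi> a x) = \<pi> a (G2 x)"
    and r: "0 < r" "r < 1"
    and pos: "\<And>x. cnonneg (cinner x (G1 x - r *\<^sub>R G2 x))"
  shows "conv_le UCP \<Theta>2 \<Theta>1"
proof -
  define \<Theta>' where "\<Theta>' = (\<lambda>a v. (1/(1-r)) *\<^sub>R (\<Theta>1 a v - r *\<^sub>R \<Theta>2 a v))"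
  have r1: "1 - r \<noteq> 0" using r by simp
  have eq: "\<Theta>1 = (\<lambda>a v. r *\<^sub>R \<Theta>2 a v + (1-r) *\<^sub>R \<Theta>' a v)"
    using r1 by (intro ext) (simp add: \<Theta>'_def)
  define G where "G = (\<lambda>z. 1 *\<^sub>R G1 z + (-r) *\<^sub>R G2 z)"
  have G: "bounded_clinear G" unfolding G_def by (rule bclin_lincomb[OF G1 G2])
  have Gc: "G (\<pi> a x) = \<pi> a (G x)" for a x
    using rep_bclin[OF rep, of a] by (simp add: G_def c1 c2 bclin_add bclin_diff bclin_scaleR)
  have Gp: "cnonneg (cinner x (G x))" for x using pos[of x] by (simp add: G_def)
  have key: "cinner x (\<Theta>' a w) = complex_of_real (1/(1-r)) * cinner (J x) (\<pi> a (G (J w)))" for x a w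
  proof -
    have "cinner x (\<Theta>' a w) = complex_of_real (1/(1-r)) * (cinner x (\<Theta>1 a w) - complex_of_real r * cinner x (\<Theta>2 a w))"
      by (simp add: \<Theta>'_def cinner_scaleR_right cinner_diff_right)
    also have "cinner x (\<Theta>1 a w) = cinner (J x) (\<pi> a (G1 (J w)))"
      by (simp add: d1 adjoint_prop2[OF J])
    also have "cinner x (\<Theta>2 a w) = cinner (J x) (\<pi> a (G2 (J w)))"
      by (simp add: d2 adjoint_prop2[OF J])
    also have "cinner (J x) (\<pi> a (G1 (J w))) - complex_of_real r * cinner (J x) (\<pi> a (G2 (J w)))
        = cinner (J x) (\<pi> a (G (J w)))"
      using rep_bclin[OF rep, of a]
      by (simp add: G_def bclin_add bclin_diff bclin_scaleR cinner_add_right cinner_diff_right cinner_scaleR_right)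
    finally show ?thesis .
  qed
  have "\<Theta>' \<in> UCP"
    unfolding UCP_def op_valued_linear_def
  proof (intro CollectI conjI allI)
    fix a
    have "\<Theta>' a = (\<lambda>v. (1/(1-r)) *\<^sub>R \<Theta>1 a v + (- (r/(1-r))) *\<^sub>R \<Theta>2 a v)"
      by (intro ext) (simp add: \<Theta>'_def scaleR_diff_right)
    then show "bounded_clinear (\<Theta>' a)"
      using bclin_lincomb[OF ucp_bclin[OF U1] ucp_bclin[OF U2], of "1/(1-r)" a "- (r/(1-r))" a] by simp
  next
    fix a b v show "\<Theta>' (a + b) v = \<Theta>' a v + \<Theta>' b v"
      by (simp add: \<Theta>'_def ucp_add[OF U1] ucp_add[OF U2] algebra_simps)
  next
    fix c a v
    have "\<Theta>' (c *\<^sub>C a) v = (1/(1-r)) *\<^sub>R (c *\<^sub>C \<Theta>1 a v - r *\<^sub>R (c *\<^sub>C \<Theta>2 a v))"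
      by (simp add: \<Theta>'_def ucp_scaleC[OF U1] ucp_scaleC[OF U2])
    also have "\<dots> = (1/(1-r)) *\<^sub>R (c *\<^sub>C (\<Theta>1 a v - r *\<^sub>R \<Theta>2 a v))"
      by (simp only: scaleC_diff_right scaleR_scaleC_commute)
    also have "\<dots> = c *\<^sub>C \<Theta>' a v" unfolding \<Theta>'_def by (rule scaleR_scaleC_commute)
    finally show "\<Theta>' (c *\<^sub>C a) v = c *\<^sub>C \<Theta>' a v" .
  next
    show "completely_positive \<Theta>'"
      unfolding completely_positive_def
    proof (intro allI)
      fix n :: nat and Y :: "nat \<Rightarrow> nat \<Rightarrow> 'a" and \<xi> :: "nat \<Rightarrow> 'h"
      have eqs: "(\<Sum>i<n. \<Sum>j<n. cinner (\<xi> i) (\<Theta>' (\<Sum>k<n. invol (Y k i) * Y k j) (\<xi> j)))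
        = complex_of_real (1/(1-r)) * (\<Sum>i<n. \<Sum>j<n. cinner (J (\<xi> i)) (\<pi> (\<Sum>k<n. invol (Y k i) * Y k j) (G (J (\<xi> j)))))"
        by (simp add: key sum_distrib_left)
      have cn: "cnonneg (\<Sum>i<n. \<Sum>j<n. cinner (J (\<xi> i)) (\<pi> (\<Sum>k<n. invol (Y k i) * Y k j) (G (J (\<xi> j)))))"
        by (rule cp_form[OF rep G Gc Gp])
      have "0 \<le> 1/(1-r)" using r by simp
      from cnonneg_scale[OF this cn]
      show "cnonneg (\<Sum>i<n. \<Sum>j<n. cinner (\<xi> i) (\<Theta>' (\<Sum>k<n. invol (Y k i) * Y k j) (\<xi> j)))"
        by (simp only: eqs)
    qed
  next
    show "\<Theta>' 1 = id"
    proof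
      fix x :: 'h
      have "x - r *\<^sub>R x = (1-r) *\<^sub>R x" by (simp add: scaleR_diff_left)
      then show "\<Theta>' 1 x = id x" using r1 by (simp add: \<Theta>'_def ucp_one[OF U1] ucp_one[OF U2])
    qed
  qed
  then show ?thesis unfolding conv_le_def using eq r by (intro bexI[of _ \<Theta>'] exI[of _ r]) auto
qed


lemma posop_bclin: "positive_op E \<Longrightarrow> bounded_clinear E"
  by (simp add: positive_op_def)
lemma posop_pos: "positive_op E \<Longrightarrow> cnonneg (cinner x (E x))"
  by (simp add: positive_op_def)

lemma posop_sesq:
  fixes E :: "'m::chilbert_space \<Rightarrow> 'm"
  assumes "positive_op E"
  shows "sesq (+) scaleC (\<lambda>x y. cinner x (E y))"
  using posop_bclin[OF assms] posop_pos[OF assms]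
  by unfold_locales (auto simp: bclin_add bclin_scaleC cinner_add_left cinner_add_right
      cinner_scaleC_left cinner_scaleC_right)

lemma posop_upper:
  fixes E :: "'m::chilbert_space \<Rightarrow> 'm"
  assumes "positive_op E"
  shows "\<exists>K>0. \<forall>x. Re (cinner x (E x)) \<le> K * (norm x)\<^sup>2"
proof -
  obtain K where K: "K > 0" "\<And>x. norm (E x) \<le> K * norm x" using bclin_bound[OF posop_bclin[OF assms]] by blast
  have "Re (cinner x (E x)) \<le> K * (norm x)\<^sup>2" for x
  proof -
    have "Re (cinner x (E x)) \<le> cmod (cinner x (E x))" by (rule complex_Re_le_cmod)
    also have "\<dots> \<le> norm x * norm (E x)" by (rule cinner_cs)
    also have "\<dots> \<le> norm x * (K * norm x)" using K(2)[of x] by (intro mult_left_mono) auto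
    finally show ?thesis by (simp add: power2_eq_square algebra_simps)
  qed
  then show ?thesis using K by blast
qed

lemma posop_inv_lower:
  fixes E :: "'m::chilbert_space \<Rightarrow> 'm"
  assumes P: "positive_op E" and I: "has_bounded_inverse E"
  shows "\<exists>c>0. \<forall>x. c * (norm x)\<^sup>2 \<le> Re (cinner x (E x))"
proof -
  interpret e: sesq "(+)" scaleC "\<lambda>x y. cinner x (E y)" by (rule posop_sesq[OF P])
  have bE: "bounded_clinear E" by (rule posop_bclin[OF P])
  obtain F where bF: "bounded_clinear F" and EF: "E \<circ> F = id" and FE: "F \<circ> E = id"
    using I by (auto simp: has_bounded_inverse_def)
  have FEx: "F (E x) = x" for x using FE by (metis comp_apply id_apply)
  obtain KE where KE: "KE > 0" "\<And>x. norm (E x) \<le> KE * norm x" using bclin_bound[OF bE] by blast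
  obtain KF where KF: "KF > 0" "\<And>x. norm (F x) \<le> KF * norm x" using bclin_bound[OF bF] by blast
  define c where "c = 1 / (KF\<^sup>2 * KE)"
  have c0: "c > 0" using KE KF by (simp add: c_def)
  have "c * (norm x)\<^sup>2 \<le> Re (cinner x (E x))" for x
  proof -
    let ?y = "E x" and ?q = "Re (cinner x (E x))"
    have q0: "0 \<le> ?q" using e.nonneg_self[of x] by simp
    have cs: "(cmod (cinner ?y ?y))\<^sup>2 \<le> Re (cinner ?y (E ?y)) * ?q"
      using e.cauchy_schwarz[of ?y x] by simp
    have 1: "cmod (cinner ?y ?y) = (norm ?y)\<^sup>2" unfolding cinner_self norm_of_real by simp
    have 2: "Re (cinner ?y (E ?y)) \<le> KE * (norm ?y)\<^sup>2"
    proof -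
      have "Re (cinner ?y (E ?y)) \<le> cmod (cinner ?y (E ?y))" by (rule complex_Re_le_cmod)
      also have "\<dots> \<le> norm ?y * norm (E ?y)" by (rule cinner_cs)
      also have "\<dots> \<le> norm ?y * (KE * norm ?y)" using KE(2)[of ?y] by (intro mult_left_mono) auto
      finally show ?thesis by (simp add: power2_eq_square algebra_simps)
    qed
    have 3: "(norm ?y)\<^sup>2 * (norm ?y)\<^sup>2 \<le> (KE * ?q) * (norm ?y)\<^sup>2"
    proof -
      have "(norm ?y)\<^sup>2 * (norm ?y)\<^sup>2 = (cmod (cinner ?y ?y))\<^sup>2" by (simp add: 1 power2_eq_square)
      also have "\<dots> \<le> Re (cinner ?y (E ?y)) * ?q" by (rule cs)
      also have "\<dots> \<le> (KE * (norm ?y)\<^sup>2) * ?q" using 2 q0 by (rule mult_right_mono)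
      finally show ?thesis by (simp add: algebra_simps)
    qed
    have 4: "(norm ?y)\<^sup>2 \<le> KE * ?q"
    proof (cases "norm ?y = 0")
      case True then show ?thesis using q0 KE by simp
    next
      case False
      then have "(norm ?y)\<^sup>2 > 0" by simp
      with 3 show ?thesis by (rule mult_right_le_imp_le)
    qed
    have 5: "(norm x)\<^sup>2 \<le> KF\<^sup>2 * (norm ?y)\<^sup>2"
    proof -
      have "norm x \<le> KF * norm ?y" using KF(2)[of ?y] by (simp add: FEx)
      then have "(norm x)\<^sup>2 \<le> (KF * norm ?y)\<^sup>2" by (intro power_mono) auto
      then show ?thesis by (simp add: power_mult_distrib)
    qed
    have "(norm x)\<^sup>2 \<le> KF\<^sup>2 * (KE * ?q)"
      using 5 mult_left_mono[OF 4, of "KF\<^sup>2"] by simp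
    then show ?thesis using KE KF by (simp add: c_def field_simps)
  qed
  then show ?thesis using c0 by blast
qed

lemma stine_rep: "min_stinespring \<Psi> \<pi> J \<Longrightarrow> unital_star_rep \<pi>"
  by (simp add: min_stinespring_def)
lemma stine_J: "min_stinespring \<Psi> \<pi> J \<Longrightarrow> bounded_clinear J"
  by (simp add: min_stinespring_def)
lemma stine_eq: "min_stinespring \<Psi> \<pi> J \<Longrightarrow> \<Psi> a = cadjoint J \<circ> \<pi> a \<circ> J"
  by (simp add: min_stinespring_def)

lemma backward:
  fixes \<Phi> \<Psi> :: "'a::cstar_algebra \<Rightarrow> 'h::chilbert_space \<Rightarrow> 'h"
    and \<pi> :: "'a \<Rightarrow> 'm::chilbert_space \<Rightarrow> 'm"
    and J :: "'h \<Rightarrow> 'm"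
  assumes UP: "\<Phi> \<in> UCP" and US: "\<Psi> \<in> UCP" and S: "min_stinespring \<Psi> \<pi> J"
    and EF: "E \<in> F_set \<pi> J" and EI: "has_bounded_inverse E"
    and Phi: "\<And>a. \<Phi> a = cadjoint J \<circ> \<pi> a \<circ> E \<circ> J"
  shows "conv_eq UCP \<Phi> \<Psi>"
proof -
  have rep: "unital_star_rep \<pi>" and J: "bounded_clinear J" using S by (auto simp: min_stinespring_def)
  have P: "positive_op E" using EF by (simp add: F_set_def)
  have bE: "bounded_clinear E" by (rule posop_bclin[OF P])
  have cE: "E (\<pi> a x) = \<pi> a (E x)" for a x
    using EF by (auto simp: F_set_def) (metis comp_apply)
  have Psi: "\<Psi> a = cadjoint J \<circ> \<pi> a \<circ> id \<circ> J" for a using stine_eq[OF S] by simp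
  have ImE: "Im (cinner x (E x)) = 0" for x using posop_pos[OF P, of x] by (simp add: cnonneg_def)
  have 1: "conv_le UCP \<Phi> \<Psi>"
  proof -
    obtain K where K: "K > 0" "\<And>x. Re (cinner x (E x)) \<le> K * (norm x)\<^sup>2" using posop_upper[OF P] by blast
    define r where "r = 1 / (K + 1)"
    have r: "0 < r" "r < 1" using K(1) by (auto simp: r_def)
    have rK: "r * K \<le> 1" using K(1) by (simp add: r_def field_simps)
    have ci: "\<And>a x. id (\<pi> a x) = \<pi> a (id x)" by simp
    have "cnonneg (cinner x (id x - r *\<^sub>R E x))" for x
      proof -
        have "r * Re (cinner x (E x)) \<le> r * (K * (norm x)\<^sup>2)" using K(2)[of x] r by (intro mult_left_mono) auto
        also have "\<dots> = (r * K) * (norm x)\<^sup>2" by simp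
        also have "\<dots> \<le> 1 * (norm x)\<^sup>2" using rK by (intro mult_right_mono) auto
        finally have "r * Re (cinner x (E x)) \<le> (norm x)\<^sup>2" by simp
        then show ?thesis using ImE[of x]
          by (simp add: cnonneg_def cinner_diff_right cinner_scaleR_right cinner_self)
      qed
    from conv_le_dil[where r=r, OF rep J US UP Psi Phi bclin_id bE ci cE r this]
    show ?thesis .
  qed
  have 2: "conv_le UCP \<Psi> \<Phi>"
  proof -
    obtain c where c: "c > 0" "\<And>x. c * (norm x)\<^sup>2 \<le> Re (cinner x (E x))" using posop_inv_lower[OF P EI] by blast
    define r where "r = min (1/2) c"
    have r: "0 < r" "r < 1" using c(1) by (auto simp: r_def)
    have rc: "r \<le> c" by (simp add: r_def)
    have ci: "\<And>a x. id (\<pi> a x) = \<pi> a (id x)" by simp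
    have "cnonneg (cinner x (E x - r *\<^sub>R id x))" for x
      proof -
        have "r * (norm x)\<^sup>2 \<le> c * (norm x)\<^sup>2" using rc by (intro mult_right_mono) auto
        then have "r * (norm x)\<^sup>2 \<le> Re (cinner x (E x))" using c(2)[of x] by linarith
        then show ?thesis using ImE[of x]
          by (simp add: cnonneg_def cinner_diff_right cinner_scaleR_right cinner_self)
      qed
    from conv_le_dil[where r=r, OF rep J UP US Phi Psi bE bclin_id cE ci r this]
    show ?thesis .
  qed
  show ?thesis using 1 2 by (simp add: conv_eq_def)
qed


definition iota :: "('a::cstar_algebra \<Rightarrow> 'm::chilbert_space \<Rightarrow> 'm) \<Rightarrow> ('h::chilbert_space \<Rightarrow> 'm) \<Rightarrow> ('a \<times> 'h) list \<Rightarrow> 'm" where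
  "iota \<pi> J l = (\<Sum>p\<leftarrow>l. \<pi> (fst p) (J (snd p)))"

definition Bf :: "('a::cstar_algebra \<Rightarrow> 'h::chilbert_space \<Rightarrow> 'h) \<Rightarrow> ('a \<times> 'h) list \<Rightarrow> ('a \<times> 'h) list \<Rightarrow> complex" where
  "Bf \<Phi> l1 l2 = (\<Sum>p\<leftarrow>l1. \<Sum>q\<leftarrow>l2. cinner (snd p) (\<Phi> (invol (fst p) * fst q) (snd q)))"

definition lscal :: "complex \<Rightarrow> ('a \<times> 'h::complex_vector) list \<Rightarrow> ('a \<times> 'h) list" where
  "lscal c l = map (\<lambda>p. (fst p, c *\<^sub>C snd p)) l"

definition lmul :: "'a::cstar_algebra \<Rightarrow> ('a \<times> 'h) list \<Rightarrow> ('a \<times> 'h) list" where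
  "lmul c l = map (\<lambda>p. (c * fst p, snd p)) l"

lemma sum_list_cmult: "(\<Sum>x\<leftarrow>xs. (c::complex) * f x) = c * (\<Sum>x\<leftarrow>xs. f x)"
  by (induction xs) (auto simp: algebra_simps)

lemma sum_list_swap: "(\<Sum>x\<leftarrow>xs. \<Sum>y\<leftarrow>ys. f x y) = (\<Sum>y\<leftarrow>ys. \<Sum>x\<leftarrow>xs. (f x y::'b::comm_monoid_add))"
  by (induction xs) (auto simp: sum_list_addf)

lemma iota_append: "iota \<pi> J (l1 @ l2) = iota \<pi> J l1 + iota \<pi> J l2"
  by (simp add: iota_def)
lemma iota_Nil: "iota \<pi> J [] = 0"
  by (simp add: iota_def)
lemma iota_single: "iota \<pi> J [(a, v)] = \<pi> a (J v)"
  by (simp add: iota_def)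

context
  fixes \<pi> :: "'a::cstar_algebra \<Rightarrow> 'm::chilbert_space \<Rightarrow> 'm" and J :: "'h::chilbert_space \<Rightarrow> 'm"
  assumes rep: "unital_star_rep \<pi>" and J: "bounded_clinear J"
begin

lemma iota_lscal: "iota \<pi> J (lscal c l) = c *\<^sub>C iota \<pi> J l"
  by (induction l) (auto simp: iota_def lscal_def bclin_scaleC[OF J] bclin_scaleC[OF rep_bclin[OF rep]] scaleC_add_right)

lemma iota_lmul: "iota \<pi> J (lmul c l) = \<pi> c (iota \<pi> J l)"
  by (induction l) (auto simp: iota_def lmul_def rep_mult[OF rep] bclin_add[OF rep_bclin[OF rep]] bclin_zero[OF rep_bclin[OF rep]])

lemma Bf_dil:
  assumes "\<And>a. \<Psi> a = cadjoint J \<circ> \<pi> a \<circ> J"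
  shows "Bf \<Psi> l1 l2 = cinner (iota \<pi> J l1) (iota \<pi> J l2)"
proof -
  have "cinner v (\<Psi> (invol a * b) w) = cinner (\<pi> a (J v)) (\<pi> b (J w))" for v w a b
    by (simp add: assms adjoint_prop2[OF J] rep_mult[OF rep] rep_invol[OF rep] adjoint_prop2[OF rep_bclin[OF rep]])
  then show ?thesis
    by (simp add: Bf_def iota_def cinner_sum_list_left cinner_sum_list_right) (rule sum_list_swap)
qed

end

lemma Bf_append_left: "Bf \<Phi> (l1 @ l2) l3 = Bf \<Phi> l1 l3 + Bf \<Phi> l2 l3"
  by (simp add: Bf_def)
lemma Bf_append_right: "Bf \<Phi> l1 (l2 @ l3) = Bf \<Phi> l1 l2 + Bf \<Phi> l1 l3"
  by (simp add: Bf_def sum_list_addf)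
lemma Bf_lscal_left: "Bf \<Phi> (lscal c l1) l2 = cnj c * Bf \<Phi> l1 l2"
  by (simp add: Bf_def lscal_def o_def cinner_scaleC_left sum_list_cmult)
lemma Bf_lscal_right:
  assumes "\<Phi> \<in> UCP" shows "Bf \<Phi> l1 (lscal c l2) = c * Bf \<Phi> l1 l2"
  by (simp add: Bf_def lscal_def o_def ucp_bclin[OF assms] bclin_scaleC cinner_scaleC_right sum_list_cmult)
lemma Bf_lmul:
  "Bf \<Phi> (lmul c l1) l2 = Bf \<Phi> l1 (lmul (invol c) l2)"
  by (simp add: Bf_def lmul_def o_def invol_mult mult.assoc)

lemma Bf_comb:
  "Bf (\<lambda>a v. t *\<^sub>R \<Phi> a v + s *\<^sub>R \<Psi> a v) l1 l2 = complex_of_real t * Bf \<Phi> l1 l2 + complex_of_real s * Bf \<Psi> l1 l2"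
  by (simp add: Bf_def cinner_add_right cinner_scaleR_right sum_list_addf sum_list_cmult)

lemma sum_list_map_nth: "(\<Sum>x\<leftarrow>xs. f x) = (\<Sum>i<length xs. f (xs ! i))"
  by (simp add: sum_list_sum_nth atLeast0LessThan)

lemma invol_zero: "invol (0::'a::cstar_algebra) = 0"
  using invol_add[of "0::'a" 0] by simp

lemma invol_one: "invol (1::'a::cstar_algebra) = 1"
proof -
  have "invol (1::'a) = invol 1 * 1" by simp
  also have "\<dots> = invol 1 * invol (invol 1)" by (simp only: invol_invol)
  also have "\<dots> = invol (invol 1 * 1)" by (simp only: invol_mult)
  also have "\<dots> = invol (invol 1)" by (simp only: mult_1_right)
  also have "\<dots> = 1" by (simp only: invol_invol)
  finally show ?thesis .
qed

lemma Bf_pos: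
  assumes "completely_positive \<Phi>"
  shows "cnonneg (Bf \<Phi> l l)"
proof -
  let ?n = "length l"
  define Y where "Y = (\<lambda>(k::nat) (i::nat). if k = 0 then fst (l ! i) else 0)"
  define \<xi> where "\<xi> = (\<lambda>i::nat. snd (l ! i))"
  have c: "cnonneg (\<Sum>i<?n. \<Sum>j<?n. cinner (\<xi> i) (\<Phi> (\<Sum>k<?n. invol (Y k i) * Y k j) (\<xi> j)))"
    using assms unfolding completely_positive_def by blast
  have Ysum: "(\<Sum>k<?n. invol (Y k i) * Y k j) = invol (fst (l ! i)) * fst (l ! j)" if ilt: "i < ?n" for i j
  proof -
    obtain n' where n': "?n = Suc n'" using ilt by (cases ?n) auto
    show ?thesis unfolding n' sum.lessThan_Suc_shift by (simp add: Y_def invol_zero)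
  qed
  have "Bf \<Phi> l l = (\<Sum>i<?n. \<Sum>j<?n. cinner (\<xi> i) (\<Phi> (\<Sum>k<?n. invol (Y k i) * Y k j) (\<xi> j)))"
    by (simp add: Bf_def sum_list_map_nth \<xi>_def Ysum)
  then show ?thesis using c by simp
qed


lemma cinner_bb: "bounded_bilinear (cinner :: 'a::complex_inner \<Rightarrow> 'a \<Rightarrow> complex)"
proof
  fix a a' b b' :: 'a and r :: real
  show "cinner (a + a') b = cinner a b + cinner a' b" by (rule cinner_add_left)
  show "cinner a (b + b') = cinner a b + cinner a b'" by (rule cinner_add_right)
  show "cinner (r *\<^sub>R a) b = r *\<^sub>R cinner a b" by (simp add: cinner_scaleR_left scaleR_conv_of_real)
  show "cinner a (r *\<^sub>R b) = r *\<^sub>R cinner a b" by (simp add: cinner_scaleR_right scaleR_conv_of_real)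
  show "\<exists>K. \<forall>a b::'a. cmod (cinner a b) \<le> norm a * norm b * K"
    by (rule exI[of _ 1]) (simp add: cinner_cs)
qed

lemma cont_cinner:
  fixes f g :: "'b::topological_space \<Rightarrow> 'a::complex_inner"
  shows "continuous_on UNIV f \<Longrightarrow> continuous_on UNIV g \<Longrightarrow> continuous_on UNIV (\<lambda>x. cinner (f x) (g x))"
  by (rule bounded_bilinear.continuous_on[OF cinner_bb])

lemma cont_comp: "continuous_on UNIV g \<Longrightarrow> continuous_on UNIV h \<Longrightarrow> continuous_on UNIV (\<lambda>x. g (h x))"
  using continuous_on_compose2[of UNIV g UNIV h] by auto

lemma cont_scaleC: "continuous_on UNIV (\<lambda>x::'a::complex_inner. c *\<^sub>C x)"
  by (rule lipschitz_cont[of _ "cmod c"]) (simp add: scaleC_diff_right[symmetric] cnorm_scaleC)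

lemma dense_closed: "closure S = UNIV \<Longrightarrow> closed A \<Longrightarrow> S \<subseteq> A \<Longrightarrow> x \<in> A"
  using closure_minimal by blast

lemma dense_eq:
  fixes p q :: "'a::topological_space \<Rightarrow> 'b::t2_space"
  assumes "closure S = UNIV" "continuous_on UNIV p" "continuous_on UNIV q" "\<And>x. x \<in> S \<Longrightarrow> p x = q x"
  shows "p x = q x"
  using dense_closed[OF assms(1) closed_Collect_eq[OF assms(2,3)], of x] assms(4) by blast

lemma dense_le:
  fixes p q :: "'a::topological_space \<Rightarrow> 'b::linorder_topology"
  assumes "closure S = UNIV" "continuous_on UNIV p" "continuous_on UNIV q" "\<And>x. x \<in> S \<Longrightarrow> p x \<le> q x"
  shows "p x \<le> q x"
  using dense_closed[OF assms(1) closed_Collect_le[OF assms(2,3)], of x] assms(4) by blast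

lemma extend:
  fixes f :: "'m::real_normed_vector \<Rightarrow> 'b::{real_normed_vector,complete_space}"
  assumes dense: "closure S = UNIV" and diffS: "\<And>x y. x \<in> S \<Longrightarrow> y \<in> S \<Longrightarrow> x - y \<in> S"
    and fdiff: "\<And>x y. x \<in> S \<Longrightarrow> y \<in> S \<Longrightarrow> f (x - y) = f x - f y"
    and bd: "\<And>x. x \<in> S \<Longrightarrow> norm (f x) \<le> K * norm x"
  shows "\<exists>g. continuous_on UNIV g \<and> (\<forall>x\<in>S. g x = f x) \<and> (\<forall>x. norm (g x) \<le> K * norm x)"
proof -
  have "(max K 0)-lipschitz_on S f"
    unfolding lipschitz_on_def
  proof (intro conjI ballI)
    fix x y assume xy: "x \<in> S" "y \<in> S"
    have "dist (f x) (f y) = norm (f (x - y))" using fdiff[OF xy] by (simp add: dist_norm)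
    also have "\<dots> \<le> K * norm (x - y)" using bd[OF diffS[OF xy]] .
    also have "\<dots> \<le> max K 0 * norm (x - y)" by (intro mult_right_mono) auto
    finally show "dist (f x) (f y) \<le> max K 0 * dist x y" by (simp add: dist_norm)
  qed simp
  from uniformly_continuous_on_extension_on_closure[OF lipschitz_on_uniformly_continuous[OF this]]
  obtain g where g: "uniformly_continuous_on (closure S) g" "\<And>x. x \<in> S \<Longrightarrow> f x = g x" by metis
  have gc: "continuous_on UNIV g" using uniformly_continuous_imp_continuous[OF g(1)] dense by simp
  have "norm (g x) \<le> K * norm x" for x
  proof (rule dense_le[OF dense])
    show "continuous_on UNIV (\<lambda>x. norm (g x))" by (intro continuous_intros gc)
    show "continuous_on UNIV (\<lambda>x. K * norm x)" by (intro continuous_intros)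
    show "norm (g x) \<le> K * norm x" if "x \<in> S" for x using bd[OF that] g(2)[OF that] by simp
  qed
  then show ?thesis using gc g(2) by metis
qed

lemma dense_additive:
  fixes g :: "'m::real_normed_vector \<Rightarrow> 'b::real_normed_vector"
  assumes dense: "closure S = UNIV" and gc: "continuous_on UNIV g"
    and add: "\<And>x y. x \<in> S \<Longrightarrow> y \<in> S \<Longrightarrow> g (x + y) = g x + g y"
  shows "g (x + y) = g x + g y"
proof -
  have 1: "g (x + y) = g x + g y" if "y \<in> S" for x y
    by (rule dense_eq[OF dense, where p="\<lambda>x. g (x + y)" and q="\<lambda>x. g x + g y"])
      (auto intro!: continuous_intros cont_comp[OF gc] gc add that)
  show ?thesis
    by (rule dense_eq[OF dense, where p="\<lambda>y. g (x + y)" and q="\<lambda>y. g x + g y"])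
      (auto intro!: continuous_intros cont_comp[OF gc] gc 1)
qed

lemma riesz_dense:
  fixes f :: "'m::chilbert_space \<Rightarrow> complex"
  assumes dense: "closure S = UNIV"
    and addS: "\<And>x y. x \<in> S \<Longrightarrow> y \<in> S \<Longrightarrow> x + y \<in> S"
    and diffS: "\<And>x y. x \<in> S \<Longrightarrow> y \<in> S \<Longrightarrow> x - y \<in> S"
    and scS: "\<And>c x. x \<in> S \<Longrightarrow> c *\<^sub>C x \<in> S"
    and fadd: "\<And>x y. x \<in> S \<Longrightarrow> y \<in> S \<Longrightarrow> f (x + y) = f x + f y"
    and fdiff: "\<And>x y. x \<in> S \<Longrightarrow> y \<in> S \<Longrightarrow> f (x - y) = f x - f y"
    and fsc: "\<And>c x. x \<in> S \<Longrightarrow> f (c *\<^sub>C x) = c * f x"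
    and bd: "\<And>x. x \<in> S \<Longrightarrow> cmod (f x) \<le> K * norm x"
  shows "\<exists>u. (\<forall>x\<in>S. f x = cinner u x) \<and> norm u \<le> max K 0"
proof -
  obtain g where gc: "continuous_on UNIV g" and gf: "\<And>x. x \<in> S \<Longrightarrow> g x = f x"
    and gb: "\<And>x. cmod (g x) \<le> K * norm x"
    using extend[OF dense diffS fdiff bd] by auto
  have gadd: "g (x + y) = g x + g y" for x y
    by (rule dense_additive[OF dense gc]) (simp add: gf fadd addS)
  have gsc: "g (c *\<^sub>C x) = c * g x" for c x
    by (rule dense_eq[OF dense, where p="\<lambda>x. g (c *\<^sub>C x)" and q="\<lambda>x. c * g x"])
      (auto intro!: continuous_intros cont_comp[OF gc] gc cont_scaleC simp: gf fsc scS)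
  obtain u where u: "\<And>x. g x = cinner u x" using riesz[OF gadd gsc gb] by blast
  have "norm u \<le> max K 0"
  proof (cases "u = 0")
    case True then show ?thesis by simp
  next
    case False
    have "(norm u)\<^sup>2 = Re (cinner u u)" by (simp add: Re_cinner_self)
    also have "\<dots> \<le> cmod (g u)" by (simp add: u complex_Re_le_cmod)
    also have "\<dots> \<le> K * norm u" by (rule gb)
    also have "\<dots> \<le> max K 0 * norm u" by (intro mult_right_mono) auto
    finally have "norm u * norm u \<le> max K 0 * norm u" by (simp add: power2_eq_square)
    then show ?thesis using False by (simp add: mult_le_cancel_right)
  qed
  moreover have "\<forall>x\<in>S. f x = cinner u x" using u gf by (simp add: gf[symmetric])
  ultimately show ?thesis by blast
qed

lemma op_dense:
  fixes T :: "'m::chilbert_space \<Rightarrow> 'n::chilbert_space"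
  assumes dense: "closure S = UNIV"
    and addS: "\<And>x y. x \<in> S \<Longrightarrow> y \<in> S \<Longrightarrow> x + y \<in> S"
    and diffS: "\<And>x y. x \<in> S \<Longrightarrow> y \<in> S \<Longrightarrow> x - y \<in> S"
    and scS: "\<And>c x. x \<in> S \<Longrightarrow> c *\<^sub>C x \<in> S"
    and Tadd: "\<And>x y. x \<in> S \<Longrightarrow> y \<in> S \<Longrightarrow> T (x + y) = T x + T y"
    and Tdiff: "\<And>x y. x \<in> S \<Longrightarrow> y \<in> S \<Longrightarrow> T (x - y) = T x - T y"
    and Tsc: "\<And>c x. x \<in> S \<Longrightarrow> T (c *\<^sub>C x) = c *\<^sub>C T x"
    and bd: "\<And>x. x \<in> S \<Longrightarrow> norm (T x) \<le> K * norm x"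
  shows "\<exists>T'. bounded_clinear T' \<and> (\<forall>x\<in>S. T' x = T x) \<and> (\<forall>x. norm (T' x) \<le> K * norm x)"
proof -
  obtain g where gc: "continuous_on UNIV g" and gf: "\<And>x. x \<in> S \<Longrightarrow> g x = T x"
    and gb: "\<And>x. norm (g x) \<le> K * norm x"
    using extend[OF dense diffS Tdiff bd] by auto
  have gadd: "g (x + y) = g x + g y" for x y
    by (rule dense_additive[OF dense gc]) (simp add: gf Tadd addS)
  have gsc: "g (c *\<^sub>C x) = c *\<^sub>C g x" for c x
    by (rule dense_eq[OF dense, where p="\<lambda>x. g (c *\<^sub>C x)" and q="\<lambda>x. c *\<^sub>C g x"])
      (auto intro!: cont_comp[OF gc] cont_comp[OF cont_scaleC] gc cont_scaleC simp: gf Tsc scS)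
  have "bounded_clinear g"
    unfolding bounded_clinear_def clinear_def using gadd gsc gb
    by (auto intro!: exI[of _ K] simp: mult.commute)
  then show ?thesis using gf gb by auto
qed

lemma dense_uniq:
  fixes u1 u2 :: "'a::complex_inner"
  assumes "closure S = UNIV" "\<And>m. m \<in> S \<Longrightarrow> cinner m u1 = cinner m u2"
  shows "u1 = u2"
proof (rule cinner_ext_right)
  fix v
  show "cinner v u1 = cinner v u2"
    by (rule dense_eq[OF assms(1)]) (auto intro!: cont_cinner continuous_intros assms(2))
qed

lemma coercive_inv:
  fixes E :: "'m::chilbert_space \<Rightarrow> 'm"
  assumes bE: "bounded_clinear E" and s: "s > 0" and co: "\<And>x. s * (norm x)\<^sup>2 \<le> Re (cinner x (E x))"
  shows "has_bounded_inverse E"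
proof -
  have below: "s * norm x \<le> norm (E x)" for x
  proof (cases "x = 0")
    case True then show ?thesis by simp
  next
    case False
    have "s * (norm x)\<^sup>2 \<le> norm x * norm (E x)"
      using co[of x] complex_Re_le_cmod[of "cinner x (E x)"] cinner_cs[of x "E x"] by linarith
    then have "(s * norm x) * norm x \<le> norm (E x) * norm x" by (simp add: power2_eq_square algebra_simps)
    then show ?thesis using False by (simp add: mult_le_cancel_right)
  qed
  have inj: "E x = E y \<Longrightarrow> x = y" for x y
  proof -
    assume "E x = E y"
    then have "E (x - y) = 0" by (simp add: bclin_diff[OF bE])
    then have "s * norm (x - y) \<le> 0" using below[of "x - y"] by simp
    then show "x = y" using s by (simp add: mult_le_0_iff)
  qed
  have cl: "closed (range E)"
    unfolding closed_sequential_limits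
  proof (intro allI impI, elim conjE)
    fix y l assume yR: "\<forall>n. y n \<in> range E" and yl: "y \<longlonglongrightarrow> l"
    have "\<forall>n. \<exists>x. y n = E x" using yR by blast
    then obtain z where z: "\<And>n. y n = E (z n)" using choice[of "\<lambda>n x. y n = E x"] by blast
    have "Cauchy z"
    proof (rule CauchyI)
      fix e :: real assume e: "0 < e"
      have "Cauchy y" using yl by (rule LIMSEQ_imp_Cauchy)
      then obtain M where M: "\<And>m n. m \<ge> M \<Longrightarrow> n \<ge> M \<Longrightarrow> norm (y m - y n) < s * e"
        using s e unfolding Cauchy_iff by (metis mult_pos_pos)
      have "norm (z m - z n) < e" if "m \<ge> M" "n \<ge> M" for m n
      proof -
        have "s * norm (z m - z n) \<le> norm (y m - y n)" using below[of "z m - z n"] by (simp add: z bclin_diff[OF bE])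
        also have "\<dots> < s * e" using M[OF that] .
        finally show ?thesis using s by simp
      qed
      then show "\<exists>M. \<forall>m\<ge>M. \<forall>n\<ge>M. norm (z m - z n) < e" by blast
    qed
    then obtain \<zeta> where "z \<longlonglongrightarrow> \<zeta>" using Cauchy_convergent_iff convergent_def by blast
    then have "(\<lambda>n. E (z n)) \<longlonglongrightarrow> E \<zeta>" by (rule bclin_tendsto[OF bE])
    then have "y \<longlonglongrightarrow> E \<zeta>" by (simp add: z[symmetric])
    then have "l = E \<zeta>" using yl LIMSEQ_unique by blast
    then show "l \<in> range E" by simp
  qed
  have surj: "\<exists>x. E x = y" for y
  proof -
    have r0: "0 \<in> range E" using rangeI[of E 0] bclin_zero[OF bE] by simp
    have radd: "u + v \<in> range E" if uv: "u \<in> range E" "v \<in> range E" for u v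
    proof -
      obtain a b where "u = E a" "v = E b" using uv by blast
      then have "u + v = E (a + b)" by (simp add: bclin_add[OF bE])
      then show ?thesis by simp
    qed
    have rsc: "c *\<^sub>C v \<in> range E" if vr: "v \<in> range E" for c v
    proof -
      obtain b where "v = E b" using vr by blast
      then have "c *\<^sub>C v = E (c *\<^sub>C b)" by (simp add: bclin_scaleC[OF bE])
      then show ?thesis by simp
    qed
    obtain p where pR: "p \<in> range E" and orth: "\<And>v. v \<in> range E \<Longrightarrow> cinner v (y - p) = 0"
      using projection[OF cl r0 radd rsc, of y] by blast
    let ?z = "y - p"
    have "cinner (E ?z) ?z = 0" using orth by simp
    then have "cinner ?z (E ?z) = 0" using cinner_commute[of ?z "E ?z"] by simp
    then have "s * (norm ?z)\<^sup>2 \<le> 0" using co[of ?z] by simp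
    then have "?z = 0" using s by (simp add: mult_le_0_iff)
    then show ?thesis using pR by auto
  qed
  define F where "F = (\<lambda>y. SOME x. E x = y)"
  have EF: "E (F y) = y" for y unfolding F_def using surj[of y] by (rule someI_ex)
  have FE: "F (E x) = x" for x using inj EF by blast
  have bF: "bounded_clinear F"
    unfolding bounded_clinear_def clinear_def
  proof (intro conjI allI)
    fix x y show "F (x + y) = F x + F y" using inj by (metis EF bclin_add[OF bE])
  next
    fix c x show "F (c *\<^sub>C x) = c *\<^sub>C F x" using inj by (metis EF bclin_scaleC[OF bE])
  next
    have "norm (F x) \<le> norm x * (1/s)" for x
      using below[of "F x"] s by (simp add: EF field_simps)
    then show "\<exists>K. \<forall>x. norm (F x) \<le> norm x * K" by blast
  qed
  show ?thesis unfolding has_bounded_inverse_def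
    using bF EF FE by (intro exI[of _ F]) (auto simp: fun_eq_iff)
qed


locale fwd =
  fixes \<Phi> :: "'a::cstar_algebra \<Rightarrow> 'h::chilbert_space \<Rightarrow> 'h"
    and \<pi> :: "'a \<Rightarrow> 'm::chilbert_space \<Rightarrow> 'm" and J :: "'h \<Rightarrow> 'm" and C s :: real
  assumes UP: "\<Phi> \<in> UCP" and rep: "unital_star_rep \<pi>" and J: "bounded_clinear J"
    and dense: "closure (range (iota \<pi> J)) = UNIV"
    and C: "C > 0" and Cb: "\<And>l. Re (Bf \<Phi> l l) \<le> C * (norm (iota \<pi> J l))\<^sup>2"
    and s: "s > 0" and sb: "\<And>l. s * (norm (iota \<pi> J l))\<^sup>2 \<le> Re (Bf \<Phi> l l)"
begin

abbreviation io where "io \<equiv> iota \<pi> J"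

lemma B_sesq: "sesq (@) lscal (Bf \<Phi>)"
  by unfold_locales (auto simp: Bf_append_left Bf_append_right Bf_lscal_left Bf_lscal_right[OF UP]
      intro: Bf_pos ucp_cp[OF UP])

sublocale b: sesq "(@)" lscal "Bf \<Phi>" by (rule B_sesq)

lemma io_lscal: "io (lscal c l) = c *\<^sub>C io l"
  by (rule iota_lscal[OF rep J])
lemma io_diff: "io (l1 @ lscal (-1) l2) = io l1 - io l2"
  by (simp add: iota_append io_lscal scaleC_neg1)
lemma io_lmul: "io (lmul c l) = \<pi> c (io l)"
  by (rule iota_lmul[OF rep J])

lemma wd: "io l1 = io l2 \<Longrightarrow> Bf \<Phi> l1 h = Bf \<Phi> l2 h"
proof -
  assume eq: "io l1 = io l2"
  let ?d = "l1 @ lscal (-1) l2"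
  have "io ?d = 0" using eq by (simp add: io_diff)
  then have "Re (Bf \<Phi> ?d ?d) \<le> 0" using Cb[of ?d] by simp
  then have "Re (Bf \<Phi> ?d ?d) = 0" using b.nonneg_self[of ?d] by simp
  then have "Bf \<Phi> ?d h = 0" by (rule b.null_left)
  then show ?thesis by (simp add: Bf_append_left Bf_lscal_left)
qed

lemma wd2: "io l1 = io l2 \<Longrightarrow> Bf \<Phi> h l1 = Bf \<Phi> h l2"
  using wd[of l1 l2 h] b.herm[of l1 h] b.herm[of l2 h] by simp

definition rp where "rp m = (SOME l. io l = m)"
lemma rp_io: "io (rp (io l)) = io l"
  unfolding rp_def by (rule someI_ex) blast

definition beta where "beta m m' = Bf \<Phi> (rp m) (rp m')"
lemma beta_io: "beta (io l1) (io l2) = Bf \<Phi> l1 l2"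
  unfolding beta_def using wd[OF rp_io[of l1]] wd2[OF rp_io[of l2]] by simp

lemma M0_add: "io l1 + io l2 = io (l1 @ l2)" by (simp add: iota_append)
lemma M0_diff: "io l1 - io l2 = io (l1 @ lscal (-1) l2)" by (simp add: io_diff)
lemma M0_sc: "c *\<^sub>C io l = io (lscal c l)" by (simp add: io_lscal)
lemma M0_pi: "\<pi> c (io l) = io (lmul c l)" by (simp add: io_lmul)

lemma beta_bound: "cmod (beta (io l1) (io l2)) \<le> C * norm (io l1) * norm (io l2)"
proof -
  have "cmod (beta (io l1) (io l2)) \<le> sqrt (Re (Bf \<Phi> l1 l1)) * sqrt (Re (Bf \<Phi> l2 l2))"
    unfolding beta_io by (rule b.cs_sqrt)
  also have "\<dots> \<le> sqrt (C * (norm (io l1))\<^sup>2) * sqrt (C * (norm (io l2))\<^sup>2)"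
    using C b.nonneg_self by (intro mult_mono real_sqrt_le_mono Cb) auto
  also have "\<dots> = C * norm (io l1) * norm (io l2)"
    using C by (simp add: real_sqrt_mult)
  finally show ?thesis .
qed

lemma func_rep: "\<exists>u. (\<forall>x\<in>range io. beta x (io l') = cinner x u) \<and> norm u \<le> C * norm (io l')"
proof -
  let ?f = "\<lambda>x. cnj (beta x (io l'))"
  have "\<exists>u. (\<forall>x\<in>range io. ?f x = cinner u x) \<and> norm u \<le> max (C * norm (io l')) 0"
  proof (rule riesz_dense[OF dense])
    show "x + y \<in> range io" if "x \<in> range io" "y \<in> range io" for x y
      using that by (auto simp: M0_add)
    show "x - y \<in> range io" if "x \<in> range io" "y \<in> range io" for x y
      using that by (auto simp: M0_diff)
    show "c *\<^sub>C x \<in> range io" if "x \<in> range io" for c x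
      using that by (auto simp: M0_sc)
    show "?f (x + y) = ?f x + ?f y" if "x \<in> range io" "y \<in> range io" for x y
      using that by (auto simp: M0_add beta_io Bf_append_left)
    show "?f (x - y) = ?f x - ?f y" if "x \<in> range io" "y \<in> range io" for x y
      using that by (auto simp: M0_diff beta_io Bf_append_left Bf_lscal_left)
    show "?f (c *\<^sub>C x) = c * ?f x" if "x \<in> range io" for c x
      using that by (auto simp: M0_sc beta_io Bf_lscal_left)
    show "cmod (?f x) \<le> C * norm (io l') * norm x" if "x \<in> range io" for x
      using that beta_bound by (auto simp: mult.commute mult.left_commute)
  qed
  moreover have "max (C * norm (io l')) 0 = C * norm (io l')" using C by simp
  moreover have "cnj (cinner u x) = cinner x u" for u x using cinner_commute[of x u] by simp
  ultimately show ?thesis by (metis complex_cnj_cnj)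
qed

definition E0 where "E0 m' = (SOME u. (\<forall>x\<in>range io. beta x m' = cinner x u) \<and> norm u \<le> C * norm m')"

lemma E0: "(\<forall>x\<in>range io. beta x (io l') = cinner x (E0 (io l'))) \<and> norm (E0 (io l')) \<le> C * norm (io l')"
  unfolding E0_def using func_rep[of l'] by (rule someI_ex)

lemma E0_char: "cinner (io l) (E0 (io l')) = Bf \<Phi> l l'"
  using E0[of l'] beta_io by auto

lemma E0_uniq: "(\<And>l. cinner (io l) u = Bf \<Phi> l l') \<Longrightarrow> E0 (io l') = u"
  by (rule dense_uniq[OF dense]) (auto simp: E0_char)

lemma E_exists: "\<exists>E. bounded_clinear E \<and> (\<forall>l l'. cinner (io l) (E (io l')) = Bf \<Phi> l l') \<and> (\<forall>x. norm (E x) \<le> C * norm x)"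
proof -
  have "\<exists>T'. bounded_clinear T' \<and> (\<forall>x\<in>range io. T' x = E0 x) \<and> (\<forall>x. norm (T' x) \<le> C * norm x)"
  proof (rule op_dense[OF dense])
    show "x + y \<in> range io" if "x \<in> range io" "y \<in> range io" for x y
      using that by (auto simp: M0_add)
    show "x - y \<in> range io" if "x \<in> range io" "y \<in> range io" for x y
      using that by (auto simp: M0_diff)
    show "c *\<^sub>C x \<in> range io" if "x \<in> range io" for c x
      using that by (auto simp: M0_sc)
    show "E0 (x + y) = E0 x + E0 y" if xy: "x \<in> range io" "y \<in> range io" for x y
    proof -
      obtain l1 l2 where x: "x = io l1" and y: "y = io l2" using xy by blast
      show ?thesis unfolding x y M0_add
        by (rule E0_uniq) (simp add: cinner_add_right E0_char Bf_append_right)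
    qed
    show "E0 (x - y) = E0 x - E0 y" if xy: "x \<in> range io" "y \<in> range io" for x y
    proof -
      obtain l1 l2 where x: "x = io l1" and y: "y = io l2" using xy by blast
      show ?thesis unfolding x y M0_diff
        by (rule E0_uniq) (simp add: cinner_diff_right E0_char Bf_append_right Bf_lscal_right[OF UP])
    qed
    show "E0 (c *\<^sub>C x) = c *\<^sub>C E0 x" if xr: "x \<in> range io" for c x
    proof -
      obtain l1 where x: "x = io l1" using xr by blast
      show ?thesis unfolding x M0_sc
        by (rule E0_uniq) (simp add: cinner_scaleC_right E0_char Bf_lscal_right[OF UP])
    qed
    show "norm (E0 x) \<le> C * norm x" if "x \<in> range io" for x
      using that E0 by auto
  qed
  then obtain E where "bounded_clinear E" "\<forall>x\<in>range io. E x = E0 x" "\<forall>x. norm (E x) \<le> C * norm x"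
    by blast
  then show ?thesis by (intro exI[of _ E]) (auto simp: E0_char)
qed

end


context fwd begin

lemma io_J: "J v = io [(1, v)]"
  by (simp add: iota_single rep_one[OF rep])

lemma Bf_single: "Bf \<Phi> [(a, v)] [(b, w)] = cinner v (\<Phi> (invol a * b) w)"
  by (simp add: Bf_def)

lemma main: "\<exists>E\<in>F_set \<pi> J. has_bounded_inverse E \<and> (\<forall>a. \<Phi> a = cadjoint J \<circ> \<pi> a \<circ> E \<circ> J)"
proof -
  obtain E where bE: "bounded_clinear E" and char: "\<And>l l'. cinner (io l) (E (io l')) = Bf \<Phi> l l'"
    using E_exists by blast
  have bpi: "bounded_clinear (\<pi> a)" for a by (rule rep_bclin[OF rep])
  have cE: "continuous_on UNIV E" by (rule bclin_cont[OF bE])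
  have cpi: "continuous_on UNIV (\<pi> a)" for a by (rule bclin_cont[OF bpi])
  have cq: "continuous_on UNIV (\<lambda>x. cinner x (E x))"
    by (rule cont_cinner) (auto intro: cE continuous_on_id)
  have Im0: "Im (cinner x (E x)) = 0" for x
  proof (rule dense_eq[OF dense, where p="\<lambda>x. Im (cinner x (E x))" and q="\<lambda>x. 0"])
    show "continuous_on UNIV (\<lambda>x. Im (cinner x (E x)))" by (intro continuous_intros cq)
    show "Im (cinner x (E x)) = 0" if "x \<in> range io" for x
      using that Bf_pos[OF ucp_cp[OF UP]] by (auto simp: char cnonneg_def)
  qed simp
  have Re0: "0 \<le> Re (cinner x (E x))" for x
  proof (rule dense_le[OF dense, where p="\<lambda>x. 0" and q="\<lambda>x. Re (cinner x (E x))"])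
    show "continuous_on UNIV (\<lambda>x. Re (cinner x (E x)))" by (intro continuous_intros cq)
    show "0 \<le> Re (cinner x (E x))" if "x \<in> range io" for x
      using that Bf_pos[OF ucp_cp[OF UP]] by (auto simp: char cnonneg_def)
  qed simp
  have low: "s * (norm x)\<^sup>2 \<le> Re (cinner x (E x))" for x
  proof (rule dense_le[OF dense, where p="\<lambda>x. s * (norm x)\<^sup>2" and q="\<lambda>x. Re (cinner x (E x))"])
    show "continuous_on UNIV (\<lambda>x. Re (cinner x (E x)))" by (intro continuous_intros cq)
    show "continuous_on UNIV (\<lambda>x. s * (norm x)\<^sup>2)" by (intro continuous_intros)
    show "s * (norm x)\<^sup>2 \<le> Re (cinner x (E x))" if "x \<in> range io" for x
      using that sb by (auto simp: char)
  qed
  have comm0: "E (\<pi> c (io l')) = \<pi> c (E (io l'))" for c l'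
  proof (rule dense_uniq[OF dense])
    fix m assume "m \<in> range io"
    then obtain l where m: "m = io l" by blast
    have pc: "\<pi> c = cadjoint (\<pi> (invol c))" using rep_invol[OF rep, of "invol c"] by (simp add: invol_invol)
    have "cinner m (\<pi> c (E (io l'))) = cinner (\<pi> (invol c) (io l)) (E (io l'))"
      unfolding m pc by (rule adjoint_prop2[OF bpi])
    also have "\<dots> = Bf \<Phi> (lmul (invol c) l) l'" by (simp add: M0_pi char)
    also have "\<dots> = Bf \<Phi> l (lmul c l')" by (simp add: Bf_lmul invol_invol)
    also have "\<dots> = cinner m (E (\<pi> c (io l')))" by (simp add: m M0_pi char)
    finally show "cinner m (E (\<pi> c (io l'))) = cinner m (\<pi> c (E (io l')))" by simp
  qed
  have comm: "E (\<pi> c x) = \<pi> c (E x)" for c x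
  proof (rule dense_eq[OF dense, where p="\<lambda>x. E (\<pi> c x)" and q="\<lambda>x. \<pi> c (E x)"])
    show "continuous_on UNIV (\<lambda>x. E (\<pi> c x))" by (rule cont_comp[OF cE cpi])
    show "continuous_on UNIV (\<lambda>x. \<pi> c (E x))" by (rule cont_comp[OF cpi cE])
    show "E (\<pi> c x) = \<pi> c (E x)" if "x \<in> range io" for x using that comm0 by blast
  qed
  have JEJ: "cadjoint J \<circ> E \<circ> J = id"
  proof
    fix w
    show "(cadjoint J \<circ> E \<circ> J) w = id w"
    proof (rule cinner_ext_right)
      fix v
      have "cinner v ((cadjoint J \<circ> E \<circ> J) w) = cinner (J v) (E (J w))"
        by (simp add: adjoint_prop2[OF J])
      also have "\<dots> = Bf \<Phi> [(1, v)] [(1, w)]" by (simp only: io_J char)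
      also have "\<dots> = cinner v (id w)" by (simp add: Bf_single invol_one ucp_one[OF UP])
      finally show "cinner v ((cadjoint J \<circ> E \<circ> J) w) = cinner v (id w)" .
    qed
  qed
  have Phi: "\<Phi> a = cadjoint J \<circ> \<pi> a \<circ> E \<circ> J" for a
  proof
    fix w
    show "\<Phi> a w = (cadjoint J \<circ> \<pi> a \<circ> E \<circ> J) w"
    proof (rule cinner_ext_right)
      fix v
      have "cinner v ((cadjoint J \<circ> \<pi> a \<circ> E \<circ> J) w) = cinner (J v) (\<pi> a (E (J w)))"
        by (simp add: adjoint_prop2[OF J])
      also have "\<dots> = cinner (J v) (E (\<pi> a (J w)))" by (simp add: comm)
      also have "\<dots> = cinner (io [(1, v)]) (E (io [(a, w)]))" by (simp add: iota_single rep_one[OF rep])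
      also have "\<dots> = Bf \<Phi> [(1, v)] [(a, w)]" by (rule char)
      also have "\<dots> = cinner v (\<Phi> a w)" by (simp add: Bf_single invol_one)
      finally show "cinner v (\<Phi> a w) = cinner v ((cadjoint J \<circ> \<pi> a \<circ> E \<circ> J) w)" by simp
    qed
  qed
  have "positive_op E" unfolding positive_op_def using bE Im0 Re0 by (simp add: cnonneg_def)
  moreover have "E \<circ> \<pi> a = \<pi> a \<circ> E" for a by (rule ext) (simp add: comm)
  ultimately have "E \<in> F_set \<pi> J" using JEJ by (simp add: F_set_def)
  moreover have "has_bounded_inverse E" by (rule coercive_inv[OF bE s low])
  ultimately show ?thesis using Phi by blast
qed

end


lemma cspan_sub:
  fixes \<pi> :: "'a::cstar_algebra \<Rightarrow> 'm::chilbert_space \<Rightarrow> 'm" and J :: "'h::chilbert_space \<Rightarrow> 'm"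
  assumes rep: "unital_star_rep \<pi>" and J: "bounded_clinear J"
  shows "cspan {\<pi> a (J v) | a v. True} \<subseteq> range (iota \<pi> J)"
proof
  fix x assume "x \<in> cspan {\<pi> a (J v) | a v. True}"
  then obtain F c where F: "finite F" "F \<subseteq> {\<pi> a (J v) | a v. True}" and x: "x = (\<Sum>v\<in>F. c v *\<^sub>C v)"
    unfolding cspan_def by blast
  have "F \<subseteq> {\<pi> a (J v) | a v. True} \<Longrightarrow> (\<Sum>v\<in>F. c v *\<^sub>C v) \<in> range (iota \<pi> J)"
    using F(1)
  proof (induction F rule: finite_induct)
    case empty
    have "(\<Sum>v\<in>{}. c v *\<^sub>C v) = iota \<pi> J []" by (simp add: iota_Nil)
    then show ?case by (simp only:) (rule rangeI)
  next
    case (insert w F)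
    then obtain a v where w: "w = \<pi> a (J v)" by blast
    obtain l where l: "(\<Sum>v\<in>F. c v *\<^sub>C v) = iota \<pi> J l" using insert by blast
    have "c w *\<^sub>C w = iota \<pi> J [(a, c w *\<^sub>C v)]"
      by (simp add: w iota_single bclin_scaleC[OF J] bclin_scaleC[OF rep_bclin[OF rep]])
    then have "(\<Sum>v\<in>insert w F. c v *\<^sub>C v) = iota \<pi> J [(a, c w *\<^sub>C v)] + iota \<pi> J l"
      using insert by (simp add: l)
    also have "\<dots> = iota \<pi> J ([(a, c w *\<^sub>C v)] @ l)" by (rule iota_append[symmetric])
    finally have eqn: "(\<Sum>v\<in>insert w F. c v *\<^sub>C v) = iota \<pi> J ([(a, c w *\<^sub>C v)] @ l)" .
    show ?case unfolding eqn by (rule rangeI)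
  qed
  then show "x \<in> range (iota \<pi> J)" using F x by blast
qed

lemma stine_dense:
  fixes \<pi> :: "'a::cstar_algebra \<Rightarrow> 'm::chilbert_space \<Rightarrow> 'm" and J :: "'h::chilbert_space \<Rightarrow> 'm"
  assumes "min_stinespring \<Psi> \<pi> J"
  shows "closure (range (iota \<pi> J)) = UNIV"
proof -
  have "closure (cspan {\<pi> a (J v) | a v. True}) = UNIV" using assms by (simp add: min_stinespring_def)
  moreover have "closure (cspan {\<pi> a (J v) | a v. True}) \<subseteq> closure (range (iota \<pi> J))"
    by (rule closure_mono[OF cspan_sub[OF stine_rep[OF assms] stine_J[OF assms]]])
  ultimately show ?thesis by blast
qed

lemma fwd_bounds:
  fixes \<Phi> \<Psi> :: "'a::cstar_algebra \<Rightarrow> 'h::chilbert_space \<Rightarrow> 'h"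
    and \<pi> :: "'a \<Rightarrow> 'm::chilbert_space \<Rightarrow> 'm" and J :: "'h \<Rightarrow> 'm"
  assumes UP: "\<Phi> \<in> UCP" and US: "\<Psi> \<in> UCP" and S: "min_stinespring \<Psi> \<pi> J"
    and CE: "conv_eq UCP \<Phi> \<Psi>"
  shows "\<exists>C>0. \<forall>l. Re (Bf \<Phi> l l) \<le> C * (norm (iota \<pi> J l))\<^sup>2"
    and "\<exists>s>0. \<forall>l. s * (norm (iota \<pi> J l))\<^sup>2 \<le> Re (Bf \<Phi> l l)"
proof -
  have RePsi: "Re (Bf \<Psi> l l) = (norm (iota \<pi> J l))\<^sup>2" for l
    using Bf_dil[OF stine_rep[OF S] stine_J[OF S] stine_eq[OF S]] by (simp add: Re_cinner_self)
  have posq: "0 \<le> Re (Bf \<Theta> l l)" if "\<Theta> \<in> UCP" for \<Theta> :: "'a \<Rightarrow> 'h \<Rightarrow> 'h" and l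
    using Bf_pos[OF ucp_cp[OF that], of l] by (simp add: cnonneg_def)
  from CE have le1: "conv_le UCP \<Phi> \<Psi>" and le2: "conv_le UCP \<Psi> \<Phi>" by (auto simp: conv_eq_def)
  from le1 obtain \<Psi>' t where P': "\<Psi>' \<in> UCP" and t: "0 < t" "t \<le> 1"
    and eq1: "\<Psi> = (\<lambda>a v. t *\<^sub>R \<Phi> a v + (1 - t) *\<^sub>R \<Psi>' a v)"
    unfolding conv_le_def by blast
  from le2 obtain \<Phi>' r where F': "\<Phi>' \<in> UCP" and r: "0 < r" "r \<le> 1"
    and eq2: "\<Phi> = (\<lambda>a v. r *\<^sub>R \<Psi> a v + (1 - r) *\<^sub>R \<Phi>' a v)"
    unfolding conv_le_def by blast
  have "Re (Bf \<Phi> l l) \<le> (1/t) * (norm (iota \<pi> J l))\<^sup>2" for l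
  proof -
    have "Bf \<Psi> l l = complex_of_real t * Bf \<Phi> l l + complex_of_real (1 - t) * Bf \<Psi>' l l"
      by (subst eq1) (rule Bf_comb)
    then have "(norm (iota \<pi> J l))\<^sup>2 = t * Re (Bf \<Phi> l l) + (1 - t) * Re (Bf \<Psi>' l l)"
      using RePsi[of l] by simp
    moreover have "0 \<le> (1 - t) * Re (Bf \<Psi>' l l)" using t posq[OF P'] by simp
    ultimately have "t * Re (Bf \<Phi> l l) \<le> (norm (iota \<pi> J l))\<^sup>2" by linarith
    then show ?thesis using t by (simp add: field_simps)
  qed
  then show "\<exists>C>0. \<forall>l. Re (Bf \<Phi> l l) \<le> C * (norm (iota \<pi> J l))\<^sup>2" using t by (intro exI[of _ "1/t"]) auto
  have "r * (norm (iota \<pi> J l))\<^sup>2 \<le> Re (Bf \<Phi> l l)" for l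
  proof -
    have "Bf \<Phi> l l = complex_of_real r * Bf \<Psi> l l + complex_of_real (1 - r) * Bf \<Phi>' l l"
      by (subst eq2) (rule Bf_comb)
    then have "Re (Bf \<Phi> l l) = r * (norm (iota \<pi> J l))\<^sup>2 + (1 - r) * Re (Bf \<Phi>' l l)"
      using RePsi[of l] by simp
    moreover have "0 \<le> (1 - r) * Re (Bf \<Phi>' l l)" using r posq[OF F'] by simp
    ultimately show ?thesis by linarith
  qed
  then show "\<exists>s>0. \<forall>l. s * (norm (iota \<pi> J l))\<^sup>2 \<le> Re (Bf \<Phi> l l)" using r by blast
qed

theorem lemma3:
  fixes \<Phi> \<Psi> :: "'a::cstar_algebra \<Rightarrow> 'h::chilbert_space \<Rightarrow> 'h"
    and \<pi> :: "'a \<Rightarrow> 'm::chilbert_space \<Rightarrow> 'm"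
    and J :: "'h \<Rightarrow> 'm"
  assumes "\<Phi> \<in> UCP" and "\<Psi> \<in> UCP"
    and "min_stinespring \<Psi> \<pi> J"
  shows "conv_eq UCP \<Phi> \<Psi> \<longleftrightarrow>
    (\<exists>E\<in>F_set \<pi> J. has_bounded_inverse E \<and> (\<forall>a. \<Phi> a = cadjoint J \<circ> \<pi> a \<circ> E \<circ> J))"
proof
  assume CE: "conv_eq UCP \<Phi> \<Psi>"
  obtain C where C: "C > 0" "\<And>l. Re (Bf \<Phi> l l) \<le> C * (norm (iota \<pi> J l))\<^sup>2"
    using fwd_bounds(1)[OF assms CE] by blast
  obtain s where s: "s > 0" "\<And>l. s * (norm (iota \<pi> J l))\<^sup>2 \<le> Re (Bf \<Phi> l l)"
    using fwd_bounds(2)[OF assms CE] by blast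
  interpret f: fwd \<Phi> \<pi> J C s
    using assms(1) stine_rep[OF assms(3)] stine_J[OF assms(3)] stine_dense[OF assms(3)] C s
    by unfold_locales auto
  show "\<exists>E\<in>F_set \<pi> J. has_bounded_inverse E \<and> (\<forall>a. \<Phi> a = cadjoint J \<circ> \<pi> a \<circ> E \<circ> J)"
    by (rule f.main)
next
  assume "\<exists>E\<in>F_set \<pi> J. has_bounded_inverse E \<and> (\<forall>a. \<Phi> a = cadjoint J \<circ> \<pi> a \<circ> E \<circ> J)"
  then obtain E where "E \<in> F_set \<pi> J" "has_bounded_inverse E" "\<And>a. \<Phi> a = cadjoint J \<circ> \<pi> a \<circ> E \<circ> J"
    by blast
  then show "conv_eq UCP \<Phi> \<Psi>" using backward[OF assms] by blast
qed


end
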